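(* Let $\mathfrak{g}$ be a $(2k+1)$-dimensional Heisenberg Lie algebra ($k\ge1$). Then: (i) $\mathfrak{g}$ carries a Ricci flat Lorentzian inner product if and only if $k=1$; (ii) for every integer $q$ with $2\le q\le k$, $\mathfrak{g}$ carries a Ricci flat pseudo-Euclidean inner product of signature $(q,2k+1-q)$.
   Context: A Heisenberg Lie algebra is a real 2-step nilpotent Lie algebra of dimension $2k+1$ whose center is one-dimensional and coincides with its derived ideal. A pseudo-Euclidean inner product of signature $(a,b)$ is a nondegenerate symmetric bilinear form with $a$ negative and $b$ positive directions; Lorentzian means signature $(1,n-1)$. For an inner product $\langle\cdot,\cdot\rangle$ on a Lie algebra, the Levi-Civita product is $2\langle\mathcal{D}_uv,w\rangle=\langle[u,v],w\rangle+\langle[w,u],v\rangle+\langle[w,v],u\rangle$, the curvature $\mathcal{R}(u,v)w=\mathcal{D}_{[u,v]}w-\mathcal{D}_u\mathcal{D}_vw+\mathcal{D}_v\mathcal{D}_uw$, and the Ricci curvature $\mathfrak{r}(u,v)=\mathrm{tr}(w\mapsto\mathcal{R}(u,w)v)$; the inner product is Ricci flat if $\mathfrak{r}=0$. *)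

theory Defs
  imports "HOL-Analysis.Analysis"
begin

definition lie_algebra :: "('v::euclidean_space \<Rightarrow> 'v \<Rightarrow> 'v) \<Rightarrow> bool" where
  "lie_algebra B \<longleftrightarrow> bilinear B \<and> (\<forall>x. B x x = 0) \<and>
     (\<forall>x y z. B x (B y z) + B y (B z x) + B z (B x y) = 0)"

definition lie_center :: "('v::euclidean_space \<Rightarrow> 'v \<Rightarrow> 'v) \<Rightarrow> 'v set" where
  "lie_center B = {z. \<forall>x. B z x = 0}"

definition derived_ideal :: "('v::euclidean_space \<Rightarrow> 'v \<Rightarrow> 'v) \<Rightarrow> 'v set" where
  "derived_ideal B = span {B x y | x y. True}"

definition heisenberg :: "('v::euclidean_space \<Rightarrow> 'v \<Rightarrow> 'v) \<Rightarrow> bool" where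
  "heisenberg B \<longleftrightarrow> lie_algebra B \<and>
     (\<forall>x y z. B (B x y) z = 0) \<and> (\<exists>x y. B x y \<noteq> 0) \<and>
     dim (lie_center B) = 1 \<and> lie_center B = derived_ideal B"

definition pseudo_inner :: "('v::euclidean_space \<Rightarrow> 'v \<Rightarrow> real) \<Rightarrow> bool" where
  "pseudo_inner g \<longleftrightarrow> bilinear g \<and> (\<forall>x y. g x y = g y x) \<and>
     (\<forall>x. (\<forall>y. g x y = 0) \<longrightarrow> x = 0)"

definition neg_index :: "('v::euclidean_space \<Rightarrow> 'v \<Rightarrow> real) \<Rightarrow> nat" where
  "neg_index g = Max {dim S | S. subspace S \<and> (\<forall>x\<in>S. x \<noteq> 0 \<longrightarrow> g x x < 0)}"

definition has_signature :: "('v::euclidean_space \<Rightarrow> 'v \<Rightarrow> real) \<Rightarrow> nat \<Rightarrow> nat \<Rightarrow> bool" where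
  "has_signature g a b \<longleftrightarrow> pseudo_inner g \<and> neg_index g = a \<and> a + b = DIM('v)"

definition lorentzian :: "('v::euclidean_space \<Rightarrow> 'v \<Rightarrow> real) \<Rightarrow> bool" where
  "lorentzian g \<longleftrightarrow> has_signature g 1 (DIM('v) - 1)"

text \<open>Levi-Civita product, determined by the Koszul formula.\<close>
definition levi_civita ::
  "('v::euclidean_space \<Rightarrow> 'v \<Rightarrow> 'v) \<Rightarrow> ('v \<Rightarrow> 'v \<Rightarrow> real) \<Rightarrow> 'v \<Rightarrow> 'v \<Rightarrow> 'v" where
  "levi_civita B g u v = (THE w. \<forall>z. 2 * g w z = g (B u v) z + g (B z u) v + g (B z v) u)"

definition curvature ::
  "('v::euclidean_space \<Rightarrow> 'v \<Rightarrow> 'v) \<Rightarrow> ('v \<Rightarrow> 'v \<Rightarrow> real) \<Rightarrow> 'v \<Rightarrow> 'v \<Rightarrow> 'v \<Rightarrow> 'v" where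
  "curvature B g u v w =
     levi_civita B g (B u v) w - levi_civita B g u (levi_civita B g v w)
     + levi_civita B g v (levi_civita B g u w)"

text \<open>Trace of an endomorphism (basis-independent for linear maps).\<close>
definition trace_map :: "('v::euclidean_space \<Rightarrow> 'v) \<Rightarrow> real" where
  "trace_map f = (\<Sum>b\<in>Basis. f b \<bullet> b)"

definition ricci ::
  "('v::euclidean_space \<Rightarrow> 'v \<Rightarrow> 'v) \<Rightarrow> ('v \<Rightarrow> 'v \<Rightarrow> real) \<Rightarrow> 'v \<Rightarrow> 'v \<Rightarrow> real" where
  "ricci B g u v = trace_map (\<lambda>w. curvature B g u w v)"

definition ricci_flat :: "('v::euclidean_space \<Rightarrow> 'v \<Rightarrow> 'v) \<Rightarrow> ('v \<Rightarrow> 'v \<Rightarrow> real) \<Rightarrow> bool" where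
  "ricci_flat B g \<longleftrightarrow> (\<forall>u v. ricci B g u v = 0)"

end

theory Submission
  imports Defs
begin
definition om :: "('v::euclidean_space \<Rightarrow> 'v \<Rightarrow> 'v) \<Rightarrow> 'v \<Rightarrow> 'v \<Rightarrow> 'v \<Rightarrow> real" where
  "om B z x y = (B x y \<bullet> z) / (z \<bullet> z)"

locale hs =
  fixes B :: "'v::euclidean_space \<Rightarrow> 'v \<Rightarrow> 'v" and z :: 'v
  assumes bil: "bilinear B" and alt: "\<And>x. B x x = 0" and zne: "z \<noteq> 0"
    and brz: "\<And>x y. B x y = om B z x y *\<^sub>R z"
    and cen: "\<And>x. (\<forall>y. B x y = 0) \<Longrightarrow> x \<in> span {z}"
    and zc: "\<And>y. B z y = 0"
    and nz: "\<exists>x y. B x y \<noteq> 0"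
begin

abbreviation "w x y \<equiv> om B z x y"

lemma om_bil: "bilinear w"
  unfolding bilinear_def om_def
  by (auto intro!: linearI simp: bilinear_radd[OF bil] bilinear_ladd[OF bil]
      bilinear_rmul[OF bil] bilinear_lmul[OF bil] inner_add_left add_divide_distrib)

lemma om_alt[simp]: "w x x = 0" by (simp add: om_def alt)

lemma B_anti: "B x y = - B y x"
proof -
  have "B (x+y) (x+y) = 0" by (rule alt)
  moreover have "B (x+y) (x+y) = B x x + B x y + (B y x + B y y)"
    using bil by (simp add: bilinear_radd bilinear_ladd)
  ultimately have "B x y + B y x = 0" by (simp add: alt)
  then show ?thesis by (simp add: eq_neg_iff_add_eq_0)
qed

lemma om_anti: "w x y = - w y x"
  by (simp add: om_def B_anti[of x y])

lemma om_z1[simp]: "w z y = 0" by (simp add: om_def zc)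
lemma om_z2[simp]: "w y z = 0" using om_anti[of y z] by simp

lemma om_rad: assumes "\<And>y. w x y = 0" shows "\<exists>t. x = t *\<^sub>R z"
proof -
  have "x \<in> span {z}" using assms brz by (intro cen) simp
  then show ?thesis by (auto simp: span_singleton)
qed

lemma zz: "z \<bullet> z \<noteq> 0" using zne by simp

end

lemma heis_hs: assumes "heisenberg B" shows "\<exists>z. hs B z"
proof -
  have la: "lie_algebra B" and nz: "\<exists>x y. B x y \<noteq> 0" and d1: "dim (lie_center B) = 1"
    and cd: "lie_center B = derived_ideal B" and nil: "\<And>x y z. B (B x y) z = 0"
    using assms unfolding heisenberg_def by auto
  have bil: "bilinear B" and alt: "\<And>x. B x x = 0" using la unfolding lie_algebra_def by auto
  have sub: "subspace (lie_center B)"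
    unfolding lie_center_def subspace_def
    by (auto simp: bilinear_lzero[OF bil] bilinear_ladd[OF bil] bilinear_lmul[OF bil])
  obtain C where C: "C \<subseteq> lie_center B" "independent C" "lie_center B \<subseteq> span C" "card C = dim (lie_center B)"
    using basis_exists by blast
  then obtain z where Cz: "C = {z}" using d1 by (auto simp: card_Suc_eq)
  have zne: "z \<noteq> 0" using C(2) Cz by auto
  have cspan: "lie_center B = span {z}"
    using C Cz sub by (metis span_minimal subset_antisym)
  have zc: "\<And>y. B z y = 0" using C(1) Cz unfolding lie_center_def by auto
  have "\<And>x y. B x y \<in> span {z}"
    using cd cspan unfolding derived_ideal_def by (auto intro: span_base)
  then have brz: "\<And>x y. B x y = om B z x y *\<^sub>R z"
  proof -
    fix x y
    obtain t where t: "B x y = t *\<^sub>R z" using \<open>\<And>x y. B x y \<in> span {z}\<close>[of x y] by (auto simp: span_singleton)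
    then show "B x y = om B z x y *\<^sub>R z" using zne by (simp add: om_def)
  qed
  have cen: "\<And>x. (\<forall>y. B x y = 0) \<Longrightarrow> x \<in> span {z}"
    using cspan unfolding lie_center_def by auto
  have "hs B z" using bil alt zne brz cen zc nz by unfold_locales auto
  then show ?thesis by blast
qed

lemma tr_add: "trace_map (\<lambda>x. F x + G x) = trace_map F + trace_map G"
  by (simp add: trace_map_def inner_add_left sum.distrib)
lemma tr_diff: "trace_map (\<lambda>x. F x - G x) = trace_map F - trace_map G"
  by (simp add: trace_map_def inner_diff_left sum_subtractf)
lemma tr_scale: "trace_map (\<lambda>x. c *\<^sub>R F x) = c * trace_map F"
  by (simp add: trace_map_def sum_distrib_left)
lemma tr_zero: "trace_map (\<lambda>x. 0) = 0"
  by (simp add: trace_map_def)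
lemma tr_sum: "trace_map (\<lambda>x. \<Sum>i\<in>I. F i x) = (\<Sum>i\<in>I. trace_map (F i))"
  unfolding trace_map_def by (simp add: inner_sum_left sum.swap[of _ I])
lemma tr_rank1: assumes "linear f" shows "trace_map (\<lambda>x. f x *\<^sub>R v) = f v"
proof -
  have "trace_map (\<lambda>x. f x *\<^sub>R v) = (\<Sum>b\<in>Basis. f b * (v \<bullet> b))"
    by (simp add: trace_map_def)
  also have "\<dots> = (\<Sum>b\<in>Basis. f ((v \<bullet> b) *\<^sub>R b))"
    using linear_scale[OF assms] by (simp add: mult.commute)
  also have "\<dots> = f (\<Sum>b\<in>Basis. (v \<bullet> b) *\<^sub>R b)"
    by (simp add: linear_sum[OF assms])
  finally show ?thesis by (simp add: euclidean_representation)
qed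

locale gs = hs B z for B :: "'v::euclidean_space \<Rightarrow> 'v \<Rightarrow> 'v" and z +
  fixes g :: "'v::euclidean_space \<Rightarrow> 'v \<Rightarrow> real" and J :: "'v \<Rightarrow> 'v"
  assumes pi: "pseudo_inner g" and linJ: "linear J" and gJ: "\<And>x y. g (J x) y = om B z x y"
begin

lemma gbil: "bilinear g" and gsym: "g x y = g y x" and gnd: "(\<And>y. g x y = 0) \<Longrightarrow> x = 0"
  using pi unfolding pseudo_inner_def by auto

lemmas g_simps = bilinear_radd[OF gbil] bilinear_ladd[OF gbil] bilinear_rmul[OF gbil, simplified]
  bilinear_lmul[OF gbil, simplified] bilinear_rsub[OF gbil] bilinear_lsub[OF gbil]
  bilinear_rzero[OF gbil] bilinear_lzero[OF gbil] bilinear_rneg[OF gbil] bilinear_lneg[OF gbil]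
lemmas w_simps = bilinear_radd[OF om_bil] bilinear_ladd[OF om_bil] bilinear_rmul[OF om_bil, simplified]
  bilinear_lmul[OF om_bil, simplified] bilinear_rsub[OF om_bil] bilinear_lsub[OF om_bil]
  bilinear_rzero[OF om_bil] bilinear_lzero[OF om_bil] bilinear_rneg[OF om_bil] bilinear_lneg[OF om_bil]
lemmas J_simps = linear_add[OF linJ] linear_diff[OF linJ] linear_scale[OF linJ] linear_0[OF linJ] linear_neg[OF linJ]

lemma Jz[simp]: "J z = 0" by (rule gnd) (simp add: gJ)
lemma gzJ[simp]: "g z (J x) = 0" by (simp add: gsym[of z] gJ)

definition D :: "'v \<Rightarrow> 'v \<Rightarrow> 'v" where
  "D x y = (1/2) *\<^sub>R (w x y *\<^sub>R z - g z y *\<^sub>R J x - g z x *\<^sub>R J y)"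

lemma lc_eq: "2 * g (D x y) v = g (B x y) v + g (B v x) y + g (B v y) x"
  by (simp add: D_def g_simps gJ brz[of x y] brz[of v x] brz[of v y] gsym[of z] om_anti[of v x] om_anti[of v y] algebra_simps)

lemma lc: "levi_civita B g x y = D x y"
  unfolding levi_civita_def
proof (rule the_equality)
  show "\<forall>v. 2 * g (D x y) v = g (B x y) v + g (B v x) y + g (B v y) x"
    using lc_eq by blast
  fix a assume a: "\<forall>v. 2 * g a v = g (B x y) v + g (B v x) y + g (B v y) x"
  have "\<And>v. g (a - D x y) v = 0"
  proof -
    fix v
    have e: "2 * g a v = 2 * g (D x y) v" using a lc_eq[of x y v] by simp
    show "g (a - D x y) v = 0" using e by (simp add: g_simps)
  qed
  then show "a = D x y" using gnd by force
qed

lemma D_lin1: "linear (\<lambda>x. D x y)"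
  by (rule linearI) (simp_all add: D_def w_simps g_simps J_simps algebra_simps)
lemma D_lin2: "linear (D x)"
  by (rule linearI) (simp_all add: D_def w_simps g_simps J_simps algebra_simps)

lemma curv: "curvature B g u x v = D (B u x) v - D u (D x v) + D x (D u v)"
  by (simp add: curvature_def lc)

lemma Dz: "D z v = (- (g z z / 2)) *\<^sub>R J v"
  by (simp add: D_def)

lemma lin_g2: "linear (g a)" using gbil unfolding bilinear_def by auto
lemma lin_w2: "linear (w a)" using om_bil unfolding bilinear_def by auto
lemma lin_w1: "linear (\<lambda>x. w x a)" using om_bil unfolding bilinear_def by auto

lemma ric_formula:
  "ricci B g u v = (g z z / 4) * (w (J u) v - w u (J v) - w u v * trace_map J)
     - (1/4) * g z u * g z v * trace_map (\<lambda>x. J (J x))"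
proof -
  define a where "a = D u v"
  have p1: "trace_map (\<lambda>x. D (B u x) v) = - (g z z / 2) * w u (J v)"
  proof -
    have "(\<lambda>x. D (B u x) v) = (\<lambda>x. w u x *\<^sub>R ((- (g z z / 2)) *\<^sub>R J v))"
      by (rule ext) (simp add: brz[of u] linear_scale[OF D_lin1] Dz)
    then have "trace_map (\<lambda>x. D (B u x) v) = trace_map (\<lambda>x. w u x *\<^sub>R ((- (g z z / 2)) *\<^sub>R J v))"
      by (simp only:)
    also have "\<dots> = w u ((- (g z z / 2)) *\<^sub>R J v)" by (rule tr_rank1[OF lin_w2])
    finally show ?thesis by (simp add: w_simps)
  qed
  have ga: "g z a = (1/2) * w u v * g z z"
    by (simp add: a_def D_def g_simps)
  have p2: "trace_map (\<lambda>x. D x a) = - (1/2) * g z a * trace_map J"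
  proof -
    have "(\<lambda>x. D x a) = (\<lambda>x. (1/2) *\<^sub>R (w x a *\<^sub>R z) - (1/2 * g z a) *\<^sub>R J x - (1/2) *\<^sub>R (g z x *\<^sub>R J a))"
      by (rule ext) (simp add: D_def algebra_simps)
    then have "trace_map (\<lambda>x. D x a) = (1/2) * w z a - (1/2 * g z a) * trace_map J - (1/2) * g z (J a)"
      by (simp only: tr_diff tr_scale tr_rank1[OF lin_w1] tr_rank1[OF lin_g2])
    then show ?thesis by simp
  qed
  have p3: "trace_map (\<lambda>x. D u (D x v)) = (1/2) * (- (g z z / 2) * w u (J v) - (1/2) * w (J u) v * g z z
      + (1/2) * g z u * g z v * trace_map (\<lambda>x. J (J x)))"
  proof -
    have lin_a: "linear (\<lambda>x. w u (D x v))" using linear_compose[OF D_lin1 lin_w2] by (simp add: o_def)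
    have lin_b: "linear (\<lambda>x. g z (D x v))" using linear_compose[OF D_lin1 lin_g2] by (simp add: o_def)
    have JD: "(\<lambda>x. J (D x v)) = (\<lambda>x. (- (1/2) * g z v) *\<^sub>R J (J x) - (1/2) *\<^sub>R (g z x *\<^sub>R J (J v)))"
      by (rule ext) (simp add: D_def J_simps algebra_simps)
    have tJD: "trace_map (\<lambda>x. J (D x v)) = - (1/2) * g z v * trace_map (\<lambda>x. J (J x))"
      unfolding JD by (simp only: tr_diff tr_scale tr_rank1[OF lin_g2]) simp
    have "(\<lambda>x. D u (D x v)) = (\<lambda>x. (1/2) *\<^sub>R (w u (D x v) *\<^sub>R z) - (1/2) *\<^sub>R (g z (D x v) *\<^sub>R J u) - (1/2 * g z u) *\<^sub>R J (D x v))"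
      by (rule ext) (simp add: D_def[of u] algebra_simps)
    then have "trace_map (\<lambda>x. D u (D x v)) = (1/2) * w u (D z v) - (1/2) * g z (D (J u) v) - (1/2 * g z u) * trace_map (\<lambda>x. J (D x v))"
      by (simp only: tr_diff tr_scale tr_rank1[OF lin_a] tr_rank1[OF lin_b])
    also have "\<dots> = (1/2) * (- (g z z / 2) * w u (J v)) - (1/2) * ((1/2) * w (J u) v * g z z) - (1/2 * g z u) * (- (1/2) * g z v * trace_map (\<lambda>x. J (J x)))"
      unfolding tJD by (simp add: Dz w_simps D_def g_simps)
    finally show ?thesis by (simp add: algebra_simps)
  qed
  have "ricci B g u v = trace_map (\<lambda>x. D (B u x) v - D u (D x v) + D x a)"
    by (simp add: ricci_def curv a_def)
  also have "\<dots> = trace_map (\<lambda>x. D (B u x) v) - trace_map (\<lambda>x. D u (D x v)) + trace_map (\<lambda>x. D x a)"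
    by (simp add: tr_add tr_diff)
  finally show ?thesis unfolding p1 p2 p3 ga by (simp add: algebra_simps)
qed

end

lemma exists_J:
  fixes g h :: "'v::euclidean_space \<Rightarrow> 'v \<Rightarrow> real"
  assumes "pseudo_inner g" "bilinear h"
  shows "\<exists>J. linear J \<and> (\<forall>x y. g (J x) y = h x y)"
proof -
  have gb: "bilinear g" and nd: "\<And>x. (\<forall>y. g x y = 0) \<Longrightarrow> x = 0"
    using assms(1) unfolding pseudo_inner_def by auto
  define G where "G v = (\<Sum>b\<in>Basis. g v b *\<^sub>R b)" for v
  define H where "H v = (\<Sum>b\<in>Basis. h v b *\<^sub>R b)" for v
  have rep: "f y = (\<Sum>b\<in>Basis. f b *\<^sub>R b) \<bullet> y" if "linear f" for f :: "'v \<Rightarrow> real" and y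
  proof -
    have "f y = f (\<Sum>b\<in>Basis. (y \<bullet> b) *\<^sub>R b)" by (simp add: euclidean_representation)
    also have "\<dots> = (\<Sum>b\<in>Basis. (y \<bullet> b) * f b)"
      by (simp add: linear_sum[OF that] linear_scale[OF that])
    also have "\<dots> = (\<Sum>b\<in>Basis. f b *\<^sub>R b) \<bullet> y"
      unfolding inner_sum_left by (rule sum.cong) (auto simp: mult.commute intro: inner_commute)
    finally show ?thesis .
  qed
  have lg: "linear (g v)" for v using gb unfolding bilinear_def by auto
  have lh: "linear (h v)" for v using assms(2) unfolding bilinear_def by auto
  have gG: "g v y = G v \<bullet> y" for v y unfolding G_def by (rule rep[OF lg])
  have hH: "h v y = H v \<bullet> y" for v y unfolding H_def by (rule rep[OF lh])
  have linG: "linear G" unfolding G_def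
    by (rule linearI) (simp_all add: bilinear_ladd[OF gb] bilinear_lmul[OF gb] scaleR_add_left sum.distrib scaleR_sum_right)
  have linH: "linear H" unfolding H_def
    by (rule linearI) (simp_all add: bilinear_ladd[OF assms(2)] bilinear_lmul[OF assms(2)] scaleR_add_left sum.distrib scaleR_sum_right)
  have "inj G"
  proof (rule linear_injective_0[THEN iffD2, OF linG], intro allI impI)
    fix x assume "G x = 0" then show "x = 0" using nd gG by simp
  qed
  then have "surj G" using linear_injective_imp_surjective[OF linG] by simp
  then obtain Gi where Gi: "linear Gi" "\<forall>x. G (Gi x) = x"
    using linear_surjective_isomorphism[OF linG] by blast
  define J where "J = Gi \<circ> H"
  have "linear J" unfolding J_def by (rule linear_compose[OF linH Gi(1)])
  moreover have "\<forall>x y. g (J x) y = h x y" unfolding J_def using Gi gG hH by simp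
  ultimately show ?thesis by blast
qed

context gs begin

lemma nonnull_not_flat: assumes "g z z \<noteq> 0" shows "\<not> ricci_flat B g"
proof
  assume rf: "ricci_flat B g"
  define c where "c = g z z"
  have c: "c \<noteq> 0" using assms c_def by simp
  have A: "g (J x) (J x) = 0" if "g z x = 0" for x
  proof -
    have "ricci B g x x = 0" using rf unfolding ricci_flat_def by simp
    moreover have "ricci B g x x = (c/4) * (w (J x) x - w x (J x))"
      using ric_formula[of x x] that by (simp add: c_def)
    moreover have "w (J x) x = - w x (J x)" by (rule om_anti)
    moreover have "w x (J x) = g (J x) (J x)" by (simp add: gJ)
    ultimately show ?thesis using c by simp
  qed
  have A2: "g (J x) (J x) = 0" for x
  proof -
    define x' where "x' = x - (g z x / c) *\<^sub>R z"
    have "g z x' = 0" using c by (simp add: x'_def g_simps c_def)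
    moreover have "J x' = J x" by (simp add: x'_def J_simps)
    ultimately show ?thesis using A by metis
  qed
  have A3: "g (J x) (J y) = 0" for x y
  proof -
    have "g (J (x+y)) (J (x+y)) = g (J x) (J x) + 2 * g (J x) (J y) + g (J y) (J y)"
      by (simp add: J_simps g_simps gsym[of "J y" "J x"])
    then show ?thesis using A2 by simp
  qed
  have J0: "J y = 0" for y
  proof -
    have "w (J y) x = 0" for x using A3[of x y] gJ[of x "J y"] om_anti[of x "J y"] by simp
    then obtain t where t: "J y = t *\<^sub>R z" using om_rad by blast
    have "g z (J y) = t * c" by (simp add: t g_simps c_def)
    then have "t = 0" using c by simp
    then show ?thesis using t by simp
  qed
  have "B x y = 0" for x y using brz[of x y] gJ[of x y] J0 by (simp add: g_simps)
  then show False using nz by blast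
qed

end

lemma neg_index_ge:
  fixes g :: "'v::euclidean_space \<Rightarrow> 'v \<Rightarrow> real"
  assumes "subspace S" "\<forall>x\<in>S. x \<noteq> 0 \<longrightarrow> g x x < 0"
  shows "dim S \<le> neg_index g"
  unfolding neg_index_def
proof (rule Max_ge)
  show "finite {dim S |S. subspace S \<and> (\<forall>x\<in>S. x \<noteq> 0 \<longrightarrow> g x x < 0)}"
    by (rule finite_subset[of _ "{..DIM('v)}"]) (auto simp: dim_subset_UNIV)
  show "dim S \<in> {dim S |S. subspace S \<and> (\<forall>x\<in>S. x \<noteq> 0 \<longrightarrow> g x x < 0)}"
    using assms by blast
qed

locale bform =
  fixes g :: "'v::euclidean_space \<Rightarrow> 'v \<Rightarrow> real"
  assumes gb: "bilinear g" and gsy: "\<And>x y. g x y = g y x"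
begin

lemma lin2: "linear (g a)" using gb unfolding bilinear_def by auto
lemma lin1: "linear (\<lambda>x. g x a)" using gb unfolding bilinear_def by auto

lemmas b_simps = bilinear_radd[OF gb] bilinear_ladd[OF gb] bilinear_rmul[OF gb, simplified]
  bilinear_lmul[OF gb, simplified] bilinear_rsub[OF gb] bilinear_lsub[OF gb]
  bilinear_rzero[OF gb] bilinear_lzero[OF gb] bilinear_rneg[OF gb] bilinear_lneg[OF gb]

definition orth :: "'v set \<Rightarrow> bool" where
  "orth V \<longleftrightarrow> (\<forall>v\<in>V. \<forall>v'\<in>V. v \<noteq> v' \<longrightarrow> g v v' = 0)"

lemma g_sum_r: "g a (\<Sum>v\<in>V. c v *\<^sub>R v) = (\<Sum>v\<in>V. c v * g a v)"
  by (simp add: linear_sum[OF lin2] linear_scale[OF lin2])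
lemma g_sum_l: "g (\<Sum>v\<in>V. c v *\<^sub>R v) a = (\<Sum>v\<in>V. c v * g v a)"
  by (simp add: linear_sum[OF lin1] linear_scale[OF lin1])

lemma orth_coef:
  assumes "finite V" "orth V" "u \<in> V"
  shows "g u (\<Sum>v\<in>V. c v *\<^sub>R v) = c u * g u u"
proof -
  have "g u (\<Sum>v\<in>V. c v *\<^sub>R v) = (\<Sum>v\<in>V. if v = u then c u * g u u else 0)"
    unfolding g_sum_r using assms(2,3) unfolding orth_def by (intro sum.cong) auto
  also have "\<dots> = c u * g u u" using assms(1,3) by simp
  finally show ?thesis .
qed

lemma orth_quad:
  assumes "finite V" "orth V"
  shows "g (\<Sum>v\<in>V. c v *\<^sub>R v) (\<Sum>v\<in>V. c v *\<^sub>R v) = (\<Sum>v\<in>V. (c v)^2 * g v v)"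
  unfolding g_sum_l[of c V] using orth_coef[OF assms] by (intro sum.cong) (auto simp: power2_eq_square)

lemma orth_indep:
  assumes "finite V" "orth V" "\<forall>v\<in>V. g v v \<noteq> 0"
  shows "independent V"
proof (rule independent_if_scalars_zero[OF assms(1)])
  fix f x assume s: "(\<Sum>x\<in>V. f x *\<^sub>R x) = 0" and x: "x \<in> V"
  have "g x (\<Sum>x\<in>V. f x *\<^sub>R x) = f x * g x x" by (rule orth_coef[OF assms(1,2) x])
  then show "f x = 0" using s assms(3) x by (simp add: b_simps)
qed

lemma orth_negdef:
  assumes "finite V" "orth V" "\<forall>v\<in>V. g v v < 0" "x \<in> span V" "x \<noteq> 0"
  shows "g x x < 0"
proof -
  obtain c where x: "x = (\<Sum>v\<in>V. c v *\<^sub>R v)" using assms(1,4) by (auto simp: span_finite)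
  have q: "g x x = (\<Sum>v\<in>V. (c v)^2 * g v v)" unfolding x by (rule orth_quad[OF assms(1,2)])
  have le: "\<forall>v\<in>V. 0 \<le> - ((c v)^2 * g v v)"
  proof
    fix v assume vV: "v \<in> V"
    have "g v v < 0" using assms(3) vV by blast
    then have "g v v \<le> 0" by simp
    then have "(c v)^2 * g v v \<le> 0" by (rule mult_nonneg_nonpos[OF zero_le_power2])
    then show "0 \<le> - ((c v)^2 * g v v)" by linarith
  qed
  show ?thesis
  proof (rule ccontr)
    assume "\<not> g x x < 0"
    have s1: "(\<Sum>v\<in>V. - ((c v)^2 * g v v)) = - g x x" unfolding q by (rule sum_negf)
    have s2: "(\<Sum>v\<in>V. - ((c v)^2 * g v v)) \<ge> 0" using le by (intro sum_nonneg) blast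
    have "(\<Sum>v\<in>V. - ((c v)^2 * g v v)) = 0" using s1 s2 \<open>\<not> g x x < 0\<close> by linarith
    moreover have "(\<Sum>v\<in>V. - ((c v)^2 * g v v)) = 0 \<longleftrightarrow> (\<forall>v\<in>V. - ((c v)^2 * g v v) = 0)"
      by (rule sum_nonneg_eq_0_iff[OF assms(1)]) (use le in blast)
    ultimately have z: "\<forall>v\<in>V. - ((c v)^2 * g v v) = 0" by simp
    have "\<forall>v\<in>V. c v = 0"
    proof
      fix v assume vV: "v \<in> V"
      have "(c v)^2 * g v v = 0" using z vV by simp
      moreover have "g v v \<noteq> 0" using assms(3) vV by force
      ultimately show "c v = 0" by simp
    qed
    then have "x = 0" unfolding x by simp
    then show False using assms(5) by simp
  qed
qed

lemma orth_posdef: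
  assumes "finite V" "orth V" "\<forall>v\<in>V. g v v > 0" "x \<in> span V" "x \<noteq> 0"
  shows "g x x > 0"
proof -
  obtain c where x: "x = (\<Sum>v\<in>V. c v *\<^sub>R v)" using assms(1,4) by (auto simp: span_finite)
  have q: "g x x = (\<Sum>v\<in>V. (c v)^2 * g v v)" unfolding x by (rule orth_quad[OF assms(1,2)])
  have le: "\<forall>v\<in>V. 0 \<le> ((c v)^2 * g v v)"
  proof
    fix v assume vV: "v \<in> V"
    have "g v v > 0" using assms(3) vV by blast
    then have "g v v \<ge> 0" by simp
    then show "0 \<le> ((c v)^2 * g v v)" by (rule mult_nonneg_nonneg[OF zero_le_power2])
  qed
  show ?thesis
  proof (rule ccontr)
    assume "\<not> g x x > 0"
    have s2: "(\<Sum>v\<in>V. ((c v)^2 * g v v)) \<ge> 0" using le by (intro sum_nonneg) blast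
    have "(\<Sum>v\<in>V. ((c v)^2 * g v v)) = 0" using q s2 \<open>\<not> g x x > 0\<close> by linarith
    moreover have "(\<Sum>v\<in>V. ((c v)^2 * g v v)) = 0 \<longleftrightarrow> (\<forall>v\<in>V. ((c v)^2 * g v v) = 0)"
      by (rule sum_nonneg_eq_0_iff[OF assms(1)]) (use le in blast)
    ultimately have z: "\<forall>v\<in>V. ((c v)^2 * g v v) = 0" by simp
    have "\<forall>v\<in>V. c v = 0"
    proof
      fix v assume vV: "v \<in> V"
      have "(c v)^2 * g v v = 0" using z vV by simp
      moreover have "g v v \<noteq> 0" using assms(3) vV by force
      ultimately show "c v = 0" by simp
    qed
    then have "x = 0" unfolding x by simp
    then show False using assms(5) by simp
  qed
qed

lemma GS:
  assumes "subspace S" "\<forall>x\<in>S. x \<noteq> 0 \<longrightarrow> g x x > 0"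
  shows "\<exists>E. finite E \<and> E \<subseteq> S \<and> S \<subseteq> span E \<and> (\<forall>e\<in>E. g e e = 1) \<and> orth E"
  using assms
proof (induction "dim S" arbitrary: S rule: less_induct)
  case less
  show ?case
  proof (cases "S \<subseteq> {0}")
    case True
    then show ?thesis by (intro exI[of _ "{}"]) (auto simp: orth_def)
  next
    case False
    then obtain s where s: "s \<in> S" "s \<noteq> 0" by auto
    have gs: "g s s > 0" using less.prems s by auto
    define e where "e = (1 / sqrt (g s s)) *\<^sub>R s"
    have ee: "g e e = 1" using gs by (simp add: e_def b_simps power2_eq_square[symmetric])
    have eS: "e \<in> S" using s less.prems(1) by (simp add: e_def subspace_scale)
    define S' where "S' = {x\<in>S. g e x = 0}"
    have sub': "subspace S'" using less.prems(1) unfolding S'_def subspace_def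
      by (auto simp: b_simps)
    have "e \<notin> S'" unfolding S'_def using ee by simp
    then have "S' \<subset> S" using eS unfolding S'_def by blast
    then have "dim S' < dim S" using dim_psubset[of S' S] sub' less.prems(1)
      by (simp add: span_eq_iff[THEN iffD2])
    moreover have "\<forall>x\<in>S'. x \<noteq> 0 \<longrightarrow> g x x > 0" using less.prems(2) unfolding S'_def by auto
    ultimately obtain E' where E': "finite E'" "E' \<subseteq> S'" "S' \<subseteq> span E'" "\<forall>e\<in>E'. g e e = 1" "orth E'"
      using less.hyps[OF _ sub'] by blast
    have eE': "e \<notin> E'" using E'(2) ee unfolding S'_def by auto
    show ?thesis
    proof (intro exI[of _ "insert e E'"] conjI)
      show "finite (insert e E')" using E' by simp
      show "insert e E' \<subseteq> S" using E'(2) eS unfolding S'_def by auto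
      show "S \<subseteq> span (insert e E')"
      proof
        fix x assume x: "x \<in> S"
        have "x - g e x *\<^sub>R e \<in> S'" unfolding S'_def
          using x eS less.prems(1) ee by (simp add: subspace_diff subspace_scale b_simps)
        then have "x - g e x *\<^sub>R e \<in> span (insert e E')"
          using E'(3) span_mono[of E' "insert e E'"] by auto
        moreover have "g e x *\<^sub>R e \<in> span (insert e E')" by (intro span_mul span_base) simp
        ultimately have "(x - g e x *\<^sub>R e) + g e x *\<^sub>R e \<in> span (insert e E')" by (rule span_add)
        then show "x \<in> span (insert e E')" by simp
      qed
      show "\<forall>e\<in>insert e E'. g e e = 1" using ee E'(4) by simp
      show "orth (insert e E')"
        using E'(2,5) unfolding orth_def S'_def by (auto simp: gsy)
    qed
  qed
qed

lemma orth_sig: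
  fixes v :: "'i \<Rightarrow> 'v"
  assumes fin: "finite I" and cI: "card I = DIM('v)" and nz: "\<forall>i\<in>I. g (v i) (v i) \<noteq> 0"
    and ort: "\<forall>i\<in>I. \<forall>j\<in>I. i \<noteq> j \<longrightarrow> g (v i) (v j) = 0"
  shows "pseudo_inner g \<and> neg_index g = card {i\<in>I. g (v i) (v i) < 0}"
proof -
  have inj: "inj_on v I"
  proof (rule inj_onI)
    fix i j assume ij: "i \<in> I" "j \<in> I" "v i = v j"
    show "i = j"
    proof (rule ccontr)
      assume "i \<noteq> j"
      then have "g (v i) (v j) = 0" using ort ij by blast
      then show False using nz ij by auto
    qed
  qed
  define V where "V = v ` I"
  have finV: "finite V" using fin V_def by simp
  have oV: "orth V" using ort unfolding orth_def V_def by auto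
  have nzV: "\<forall>u\<in>V. g u u \<noteq> 0" using nz V_def by auto
  have indV: "independent V" by (rule orth_indep[OF finV oV nzV])
  have cV: "card V = DIM('v)" using card_image[OF inj] cI V_def by simp
  have spV: "UNIV \<subseteq> span V" using card_eq_dim[of V UNIV] finV indV cV by simp
  have nd: "x = 0" if "\<forall>y. g x y = 0" for x
  proof -
    obtain c where x: "x = (\<Sum>u\<in>V. c u *\<^sub>R u)" using spV finV by (auto simp: span_finite)
    have "\<forall>u\<in>V. c u = 0"
    proof
      fix u assume u: "u \<in> V"
      have "g u x = c u * g u u" unfolding x by (rule orth_coef[OF finV oV u])
      then show "c u = 0" using that u nzV by (simp add: gsy[of u x])
    qed
    then show ?thesis unfolding x by simp
  qed
  have PI: "pseudo_inner g" unfolding pseudo_inner_def using gb gsy nd by blast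
  define NI where "NI = {i\<in>I. g (v i) (v i) < 0}"
  define PI' where "PI' = {i\<in>I. \<not> g (v i) (v i) < 0}"
  define N where "N = v ` NI"
  define P where "P = v ` PI'"
  have NV: "N \<subseteq> V" "P \<subseteq> V" unfolding N_def P_def NI_def PI'_def V_def by auto
  have finN: "finite N" "finite P" using NV finV finite_subset by auto
  have oN: "orth N" "orth P" using oV NV unfolding orth_def by blast+
  have cN: "card N = card NI" unfolding N_def by (rule card_image) (rule inj_on_subset[OF inj], auto simp: NI_def)
  have cP: "card P = card PI'" unfolding P_def by (rule card_image) (rule inj_on_subset[OF inj], auto simp: PI'_def)
  have un: "NI \<union> PI' = I" "NI \<inter> PI' = {}" unfolding NI_def PI'_def by auto
  have cNP: "card NI + card PI' = DIM('v)"
    using card_Un_disjoint[of NI PI'] fin cI un finite_subset[of NI I] finite_subset[of PI' I] by auto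
  have indN: "independent N" "independent P" using independent_mono[OF indV] NV by auto
  have dN: "dim (span N) = card N" "dim (span P) = card P" using dim_span_eq_card_independent indN by auto
  have nN: "\<forall>u\<in>N. g u u < 0" unfolding N_def NI_def by auto
  have negN: "\<forall>x\<in>span N. x \<noteq> 0 \<longrightarrow> g x x < 0"
    by (intro ballI impI orth_negdef[OF finN(1) oN(1) nN])
  have pP: "\<forall>u\<in>P. g u u > 0"
  proof
    fix u assume "u \<in> P"
    then obtain i where i: "i \<in> I" "\<not> g (v i) (v i) < 0" "u = v i" unfolding P_def PI'_def by auto
    then have "g (v i) (v i) \<noteq> 0" using nz by blast
    then show "g u u > 0" using i(2) unfolding i(3) by linarith
  qed
  have posP: "\<forall>x\<in>span P. x \<noteq> 0 \<longrightarrow> g x x > 0"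
    by (intro ballI impI orth_posdef[OF finN(2) oN(2) pP])
  have low: "dim (span N) \<in> {dim S |S. subspace S \<and> (\<forall>x\<in>S. x \<noteq> 0 \<longrightarrow> g x x < 0)}"
    using negN subspace_span by blast
  have up: "d \<le> card N" if dd: "d \<in> {dim S |S. subspace S \<and> (\<forall>x\<in>S. x \<noteq> 0 \<longrightarrow> g x x < 0)}" for d
  proof -
    obtain S where S: "d = dim S" "subspace S" "\<forall>x\<in>S. x \<noteq> 0 \<longrightarrow> g x x < 0" using dd by blast
    have "S \<inter> span P \<subseteq> {0}"
    proof
      fix x assume x: "x \<in> S \<inter> span P"
      show "x \<in> {0}"
      proof (rule ccontr)
        assume "x \<notin> {0}"
        then have "x \<noteq> 0" by simp
        then have "g x x < 0" "g x x > 0" using S(3) posP x by auto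
        then show False by simp
      qed
    qed
    then have d0: "dim (S \<inter> span P) = 0" by (simp add: dim_eq_0)
    have "dim {x + y |x y. x \<in> S \<and> y \<in> span P} + dim (S \<inter> span P) = dim S + dim (span P)"
      by (rule dim_sums_Int[OF S(2) subspace_span])
    moreover have "dim {x + y |x y. x \<in> S \<and> y \<in> span P} \<le> DIM('v)" by (rule dim_subset_UNIV)
    ultimately show ?thesis using d0 dN cN cP cNP S(1) by linarith
  qed
  have fin': "finite {dim S |S. subspace S \<and> (\<forall>x\<in>S. x \<noteq> 0 \<longrightarrow> g x x < 0)}"
    by (rule finite_subset[of _ "{..DIM('v)}"]) (auto simp: dim_subset_UNIV)
  have "neg_index g = card N" unfolding neg_index_def
    using Max_eqI[OF fin' up] low dN by simp
  then show ?thesis using PI cN unfolding NI_def by simp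
qed

end

sublocale gs \<subseteq> bf: bform g using gbil gsym by unfold_locales

context gs begin

lemma lor_null:
  assumes gzz: "g z z = 0" and ni: "neg_index g = 1" and rf: "ricci_flat B g"
  shows "DIM('v) \<le> 3"
proof -
  obtain y where y: "g z y \<noteq> 0" using gnd zne by blast
  define u0 where "u0 = (1 / g z y) *\<^sub>R y"
  have zu0: "g z u0 = 1" using y by (simp add: u0_def g_simps)
  define u where "u = u0 - (g u0 u0 / 2) *\<^sub>R z"
  have zu: "g z u = 1" using zu0 gzz by (simp add: u_def g_simps)
  have uz: "g u z = 1" using zu by (simp add: gsym[of u z])
  have uu: "g u u = 0" using zu0 gzz by (simp add: u_def g_simps gsym[of u0 z])
  define W where "W = {x. g z x = 0 \<and> g u x = 0}"
  have subW: "subspace W" unfolding W_def subspace_def by (simp add: g_simps)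
  define pW where "pW y = y - g u y *\<^sub>R z - g z y *\<^sub>R u" for y
  have pW: "pW y \<in> W" for y unfolding W_def pW_def using zu uu gzz uz by (simp add: g_simps)
  have dec: "y = g u y *\<^sub>R z + g z y *\<^sub>R u + pW y" for y by (simp add: pW_def)
  define t where "t = z - (1/2) *\<^sub>R u"
  have tt: "g t t = -1" using gzz zu uu uz by (simp add: t_def g_simps)
  have tW: "g t x = 0" if "x \<in> W" for x using that by (simp add: t_def W_def g_simps)
  have psd: "g x x \<ge> 0" if xW: "x \<in> W" for x
  proof (rule ccontr)
    assume "\<not> g x x \<ge> 0" then have neg: "g x x < 0" by simp
    have txne: "t \<noteq> x" using tt tW[OF xW] by auto
    have o: "bf.orth {t, x}" unfolding bf.orth_def using tW[OF xW] gsym[of x t] by auto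
    have n: "\<forall>v\<in>{t, x}. g v v < 0" using tt neg by auto
    have ind: "independent {t, x}" by (rule bf.orth_indep) (use o n in auto)
    have "dim (span {t, x}) = 2" using dim_span_eq_card_independent[OF ind] txne by simp
    moreover have "dim (span {t, x}) \<le> neg_index g"
      by (rule neg_index_ge[OF subspace_span]) (use bf.orth_negdef[OF _ o n] in auto)
    ultimately show False using ni by simp
  qed
  have pd: "g x x > 0" if xW: "x \<in> W" and xne: "x \<noteq> 0" for x
  proof (rule ccontr)
    assume "\<not> g x x > 0" then have x0: "g x x = 0" using psd[OF xW] by simp
    obtain y where yy: "g x y \<noteq> 0" using gnd xne by blast
    define y' where "y' = pW y"
    have "g x y' = g x y" using xW unfolding y'_def pW_def W_def by (simp add: g_simps gsym[of x z] gsym[of x u])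
    define a where "a = g x y'"
    have a: "a \<noteq> 0" using yy \<open>g x y' = g x y\<close> a_def by simp
    define b where "b = g y' y'"
    define d where "d = \<bar>b\<bar> + 1"
    have d: "d > 0" by (simp add: d_def)
    define c where "c = a / d"
    define x2 where "x2 = x - c *\<^sub>R y'"
    have x2W: "x2 \<in> W" unfolding x2_def using subW xW pW y'_def by (simp add: subspace_diff subspace_scale)
    have "g x2 x2 = - 2 * c * a + c^2 * b" using x0
      by (simp add: x2_def g_simps gsym[of y' x] a_def b_def power2_eq_square algebra_simps)
    also have "\<dots> = (a^2 / d^2) * (b - 2 * d)" using d by (simp add: c_def field_simps power2_eq_square)
    also have "\<dots> < 0"
    proof (rule mult_pos_neg)
      show "0 < a^2 / d^2" using a d by simp
      show "b - 2 * d < 0" unfolding d_def by (simp add: abs_if)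
    qed
    finally show False using psd[OF x2W] by simp
  qed
  obtain E where E: "finite E" "E \<subseteq> W" "W \<subseteq> span E" "\<forall>e\<in>E. g e e = 1" "bf.orth E"
    using bf.GS[OF subW] pd by blast
  have eW: "g e z = 0" "g e u = 0" if "e \<in> E" for e
    using E(2) that unfolding W_def by (auto simp: gsym[of e])
  have recW: "x = (\<Sum>e\<in>E. g e x *\<^sub>R e)" if xW: "x \<in> W" for x
  proof -
    define r where "r = x - (\<Sum>e\<in>E. g e x *\<^sub>R e)"
    have rW: "r \<in> W" unfolding r_def using subW xW E(2)
      by (intro subspace_diff subspace_sum subspace_scale) auto
    have re: "g r e = 0" if eE: "e \<in> E" for e
    proof -
      have "g e (\<Sum>e\<in>E. g e x *\<^sub>R e) = g e x * g e e" by (rule bf.orth_coef[OF E(1) E(5) eE])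
      then have "g e r = 0" using E(4) eE by (simp add: r_def g_simps)
      then show ?thesis by (simp add: gsym[of r e])
    qed
    have "g r r = 0"
      using linear_eq_on_span[of "g r" "\<lambda>_. 0" E r] lin_g2[of r] re rW E(3) linear_zero by blast
    then show ?thesis using pd rW r_def by force
  qed
  have rec: "x = g u x *\<^sub>R z + g z x *\<^sub>R u + (\<Sum>e\<in>E. g e x *\<^sub>R e)" for x
  proof -
    have p: "pW x = (\<Sum>e\<in>E. g e (pW x) *\<^sub>R e)" by (rule recW[OF pW])
    have "g e (pW x) = g e x" if "e \<in> E" for e
      using eW[OF that] by (simp add: pW_def g_simps)
    then have "(\<Sum>e\<in>E. g e (pW x) *\<^sub>R e) = (\<Sum>e\<in>E. g e x *\<^sub>R e)" by (intro sum.cong) auto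
    then show ?thesis using dec[of x] p by simp
  qed
  have JJ: "(\<lambda>x. J (J x)) = (\<lambda>x. g u x *\<^sub>R J (J z) + g z x *\<^sub>R J (J u) + (\<Sum>e\<in>E. g e x *\<^sub>R J (J e)))"
  proof
    fix x
    have "J (J x) = J (J (g u x *\<^sub>R z + g z x *\<^sub>R u + (\<Sum>e\<in>E. g e x *\<^sub>R e)))"
      by (rule arg_cong[OF rec[of x]])
    then show "J (J x) = g u x *\<^sub>R J (J z) + g z x *\<^sub>R J (J u) + (\<Sum>e\<in>E. g e x *\<^sub>R J (J e))"
      by (simp add: J_simps linear_sum[OF linJ])
  qed
  have tr: "trace_map (\<lambda>x. J (J x)) = g u (J (J z)) + g z (J (J u)) + (\<Sum>e\<in>E. g e (J (J e)))"
    unfolding JJ by (simp only: tr_add tr_sum tr_rank1[OF lin_g2])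
  have gJJ: "g (J e) (J e) = (\<Sum>e'\<in>E. (g e' (J e))^2)" for e
  proof -
    have "g (J e) (J e) = g (J e) (g u (J e) *\<^sub>R z + g z (J e) *\<^sub>R u + (\<Sum>e'\<in>E. g e' (J e) *\<^sub>R e'))"
      by (rule arg_cong[OF rec[of "J e"]])
    also have "\<dots> = (\<Sum>e'\<in>E. g e' (J e) * g (J e) e')"
      by (simp add: g_simps bf.g_sum_r gJ)
    also have "\<dots> = (\<Sum>e'\<in>E. (g e' (J e))^2)"
      by (intro sum.cong) (auto simp: gsym[of "J e"] power2_eq_square)
    finally show ?thesis .
  qed
  have ee: "g e (J (J e)) = - (\<Sum>e'\<in>E. (g e' (J e))^2)" for e
  proof -
    have "g e (J (J e)) = w (J e) e" by (simp add: gsym[of e] gJ)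
    also have "\<dots> = - w e (J e)" by (rule om_anti)
    also have "\<dots> = - g (J e) (J e)" by (simp add: gJ)
    finally show ?thesis using gJJ by simp
  qed
  have trv: "trace_map (\<lambda>x. J (J x)) = - (\<Sum>e\<in>E. \<Sum>e'\<in>E. (g e' (J e))^2)"
    unfolding tr by (simp add: ee sum_negf J_simps g_simps)
  have "ricci B g u u = - (1/4) * trace_map (\<lambda>x. J (J x))"
    using ric_formula[of u u] gzz zu by simp
  then have "(\<Sum>e\<in>E. \<Sum>e'\<in>E. (g e' (J e))^2) = 0"
    using rf trv unfolding ricci_flat_def by simp
  then have "\<forall>e\<in>E. (\<Sum>e'\<in>E. (g e' (J e))^2) = 0"
    using sum_nonneg_eq_0_iff[OF E(1), of "\<lambda>e. \<Sum>e'\<in>E. (g e' (J e))^2"] by (simp add: sum_nonneg)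
  then have "\<forall>e\<in>E. \<forall>e'\<in>E. (g e' (J e))^2 = 0"
  proof (intro ballI)
    fix e e' assume h: "\<forall>e\<in>E. (\<Sum>e'\<in>E. (g e' (J e))^2) = 0" and eE: "e \<in> E" and e'E: "e' \<in> E"
    have "(\<Sum>e'\<in>E. (g e' (J e))^2) = 0" using h eE by blast
    then show "(g e' (J e))^2 = 0"
      using sum_nonneg_eq_0_iff[OF E(1), of "\<lambda>e'. (g e' (J e))^2"] e'E by simp
  qed
  then have wE: "w e e' = 0" if "e \<in> E" "e' \<in> E" for e e'
  proof -
    have "g e' (J e) = 0" using that \<open>\<forall>e\<in>E. \<forall>e'\<in>E. (g e' (J e))^2 = 0\<close> by simp
    then show ?thesis by (simp add: gsym[of e'] gJ)
  qed
  have wW: "w x x' = 0" if xW: "x \<in> W" and x'W: "x' \<in> W" for x x'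
  proof -
    have s1: "w e x' = 0" if eE: "e \<in> E" for e
      using linear_eq_on_span[of "w e" "\<lambda>_. 0" E x'] lin_w2[of e] wE[OF eE] x'W E(3) linear_zero by blast
    show ?thesis
      using linear_eq_on_span[of "\<lambda>y. w y x'" "\<lambda>_. 0" E x] lin_w1[of x'] s1 xW E(3) linear_zero by blast
  qed
  have claim: "x = 0" if xW: "x \<in> W" and xu: "w x u = 0" for x
  proof -
    have "w x y = 0" for y
    proof -
      have "w x y = w x (g u y *\<^sub>R z + g z y *\<^sub>R u + pW y)" by (rule arg_cong[OF dec[of y]])
      also have "\<dots> = 0" using xu wW[OF xW pW[of y]] by (simp add: w_simps)
      finally show ?thesis .
    qed
    then obtain s where s: "x = s *\<^sub>R z" using om_rad by blast
    have "g u x = s" using uz by (simp add: s g_simps)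
    then have "s = 0" using xW unfolding W_def by simp
    then show ?thesis using s by simp
  qed
  have sp: "UNIV \<subseteq> span (insert z (insert u E))"
  proof
    fix x :: 'v
    have "g u x *\<^sub>R z + g z x *\<^sub>R u + (\<Sum>e\<in>E. g e x *\<^sub>R e) \<in> span (insert z (insert u E))"
      by (intro span_add span_mul span_sum span_base) auto
    then show "x \<in> span (insert z (insert u E))" using rec[of x] by simp
  qed
  have "DIM('v) \<le> card (insert z (insert u E))"
    using dim_le_card[OF sp] E(1) by simp
  also have "\<dots> \<le> card E + 2"
    using E(1) card_insert_le_m1 by (simp add: card_insert_if)
  finally have cE: "DIM('v) \<le> card E + 2" .
  show ?thesis
  proof (rule ccontr)
    assume "\<not> DIM('v) \<le> 3"
    then have "card E \<ge> 2" using cE by simp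
    then obtain e1 where e1: "e1 \<in> E" by fastforce
    have "card (E - {e1}) \<ge> 1" using \<open>card E \<ge> 2\<close> e1 E(1) by simp
    then have "E - {e1} \<noteq> {}" by (metis card.empty not_one_le_zero)
    then obtain e2 where e2: "e2 \<in> E" "e2 \<noteq> e1" by blast
    have W1: "e1 \<in> W" and W2: "e2 \<in> W" using e1 e2 E(2) by auto
    have n1: "g e1 e1 = 1" and n2: "g e2 e2 = 1" using E(4) e1 e2 by auto
    have o12: "g e2 e1 = 0" using E(5) e1 e2 unfolding bf.orth_def by auto
    show False
    proof (cases "w e1 u = 0")
      case True
      then have "e1 = 0" using claim[OF W1] by simp
      then show False using n1 by (simp add: g_simps)
    next
      case False
      define x where "x = e2 - (w e2 u / w e1 u) *\<^sub>R e1"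
      have xW: "x \<in> W" unfolding x_def using subW W1 W2 by (simp add: subspace_diff subspace_scale)
      have "w x u = 0" using False by (simp add: x_def w_simps)
      then have "x = 0" using claim[OF xW] by simp
      moreover have "g e2 x = 1" using n2 o12 by (simp add: x_def g_simps)
      ultimately show False by (simp add: g_simps)
    qed
  qed
qed

end

context hs begin

definition darb :: "nat \<Rightarrow> (nat \<Rightarrow> 'v) \<Rightarrow> (nat \<Rightarrow> 'v) \<Rightarrow> bool" where
  "darb m e f \<longleftrightarrow> (\<forall>i<m. \<forall>j<m. w (e i) (f j) = (if i = j then 1 else 0) \<and> w (e i) (e j) = 0 \<and> w (f i) (f j) = 0)"

definition Pr :: "nat \<Rightarrow> (nat \<Rightarrow> 'v) \<Rightarrow> (nat \<Rightarrow> 'v) \<Rightarrow> 'v \<Rightarrow> 'v" where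
  "Pr m e f x = x - (\<Sum>i<m. w x (f i) *\<^sub>R e i + w (e i) x *\<^sub>R f i)"

lemmas w_simps = bilinear_radd[OF om_bil] bilinear_ladd[OF om_bil] bilinear_rmul[OF om_bil, simplified]
  bilinear_lmul[OF om_bil, simplified] bilinear_rsub[OF om_bil] bilinear_lsub[OF om_bil]
  bilinear_rzero[OF om_bil] bilinear_lzero[OF om_bil] bilinear_rneg[OF om_bil] bilinear_lneg[OF om_bil]

lemma lw2: "linear (w a)" using om_bil unfolding bilinear_def by auto
lemma lw1: "linear (\<lambda>x. w x a)" using om_bil unfolding bilinear_def by auto

lemma w_sum_r: "w a (\<Sum>i\<in>A. F i) = (\<Sum>i\<in>A. w a (F i))" by (rule linear_sum[OF lw2])
lemma w_sum_l: "w (\<Sum>i\<in>A. F i) a = (\<Sum>i\<in>A. w (F i) a)" using linear_sum[OF lw1[of a]] by simp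

lemma Pperp:
  assumes d: "darb m e f" and j: "j < m"
  shows "w (Pr m e f x) (e j) = 0" "w (Pr m e f x) (f j) = 0"
proof -
  have fe: "w (f i) (e j) = - (if i = j then 1 else 0)" if "i < m" for i
    using d that j om_anti[of "f i" "e j"] unfolding darb_def by (auto split: if_splits)
  have "w (Pr m e f x) (e j) = w x (e j) - (\<Sum>i<m. w x (f i) * w (e i) (e j) + w (e i) x * w (f i) (e j))"
    by (simp add: Pr_def w_simps w_sum_l)
  also have "(\<Sum>i<m. w x (f i) * w (e i) (e j) + w (e i) x * w (f i) (e j)) = (\<Sum>i<m. - (if i = j then w (e j) x else 0))"
    using d fe j unfolding darb_def by (intro sum.cong) auto
  also have "\<dots> = - w (e j) x" using j by (simp add: sum_negf)
  finally show "w (Pr m e f x) (e j) = 0" using om_anti[of x "e j"] by simp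
  have "w (Pr m e f x) (f j) = w x (f j) - (\<Sum>i<m. w x (f i) * w (e i) (f j) + w (e i) x * w (f i) (f j))"
    by (simp add: Pr_def w_simps w_sum_l)
  also have "(\<Sum>i<m. w x (f i) * w (e i) (f j) + w (e i) x * w (f i) (f j)) = (\<Sum>i<m. (if i = j then w x (f j) else 0))"
    using d j unfolding darb_def by (intro sum.cong) auto
  also have "\<dots> = w x (f j)" using j by simp
  finally show "w (Pr m e f x) (f j) = 0" by simp
qed

lemma Pspan: "x - Pr m e f x \<in> span (e ` {..<m} \<union> f ` {..<m})"
  unfolding Pr_def by (simp, intro span_sum span_add span_mul span_base) auto

lemma Pzero_rad:
  assumes d: "darb m e f" and h: "\<forall>x y. w (Pr m e f x) (Pr m e f y) = 0"
  shows "Pr m e f x \<in> span {z}"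
proof -
  have "w (Pr m e f x) y = 0" for y
  proof -
    have "w (Pr m e f x) (y - Pr m e f y) = 0"
    proof (rule linear_eq_on_span[of "w (Pr m e f x)" "\<lambda>_. 0", OF lw2 linear_zero _ Pspan])
      fix b assume "b \<in> e ` {..<m} \<union> f ` {..<m}"
      then show "w (Pr m e f x) b = 0" using Pperp[OF d] by auto
    qed
    then show ?thesis using h by (simp add: w_simps)
  qed
  then obtain t where "Pr m e f x = t *\<^sub>R z" using om_rad by blast
  then show ?thesis by (metis span_base span_mul singletonI)
qed

lemma darb_extend:
  assumes d: "darb m e f" and dim: "2 * m + 1 < DIM('v)"
  shows "\<exists>e' f'. darb (Suc m) e' f'"
proof -
  have "\<exists>x y. w (Pr m e f x) (Pr m e f y) \<noteq> 0"
  proof (rule ccontr)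
    assume "\<not> ?thesis"
    then have h: "\<forall>x y. w (Pr m e f x) (Pr m e f y) = 0" by blast
    define T where "T = insert z (e ` {..<m} \<union> f ` {..<m})"
    have "UNIV \<subseteq> span T"
    proof
      fix x :: 'v
      have a: "Pr m e f x \<in> span T" using Pzero_rad[OF d h] span_mono[of "{z}" T] unfolding T_def by auto
      have b: "x - Pr m e f x \<in> span T" using Pspan[of x m e f] span_mono[of _ T] unfolding T_def
        by (meson subset_insertI subsetD)
      have "Pr m e f x + (x - Pr m e f x) \<in> span T" by (rule span_add[OF a b])
      then show "x \<in> span T" by simp
    qed
    then have "DIM('v) \<le> card T" using dim_le_card[of UNIV T] unfolding T_def by simp
    also have "card T \<le> Suc (card (e ` {..<m} \<union> f ` {..<m}))" unfolding T_def by (simp add: card_insert_le_m1 card_insert_if)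
    also have "card (e ` {..<m} \<union> f ` {..<m}) \<le> card (e ` {..<m}) + card (f ` {..<m})" by (rule card_Un_le)
    also have "\<dots> \<le> m + m" using card_image_le[of "{..<m}" e] card_image_le[of "{..<m}" f] by simp
    finally show False using dim by simp
  qed
  then obtain x y where xy: "w (Pr m e f x) (Pr m e f y) \<noteq> 0" by blast
  define p where "p = Pr m e f x"
  define q where "q = (1 / w p (Pr m e f y)) *\<^sub>R Pr m e f y"
  have pq: "w p q = 1" using xy by (simp add: q_def p_def w_simps)
  have qp: "w q p = -1" using pq om_anti[of q p] by simp
  have pp: "w p p = 0" "w q q = 0" by simp_all
  have pe: "w p (e j) = 0" "w p (f j) = 0" "w q (e j) = 0" "w q (f j) = 0" if "j < m" for j
    using Pperp[OF d that] unfolding p_def q_def by (simp_all add: w_simps)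
  have ep: "w (e j) p = 0" "w (f j) p = 0" "w (e j) q = 0" "w (f j) q = 0" if "j < m" for j
    using pe[OF that] om_anti by (metis neg_equal_0_iff_equal)+
  define e' where "e' = e(m := p)"
  define f' where "f' = f(m := q)"
  have "darb (Suc m) e' f'"
    unfolding darb_def
  proof (intro allI impI)
    fix i j assume i: "i < Suc m" and j: "j < Suc m"
    show "w (e' i) (f' j) = (if i = j then 1 else 0) \<and> w (e' i) (e' j) = 0 \<and> w (f' i) (f' j) = 0"
      using d i j pq pp pe ep unfolding darb_def e'_def f'_def
      by (cases "i = m"; cases "j = m") (auto simp: less_Suc_eq)
  qed
  then show ?thesis by blast
qed

lemma darb_exists: assumes "2 * m + 1 \<le> DIM('v)" shows "\<exists>e f. darb m e f"
  using assms
proof (induction m)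
  case 0 then show ?case by (auto simp: darb_def)
next
  case (Suc m)
  then obtain e f where "darb m e f" by auto
  then show ?case using darb_extend Suc.prems by simp
qed

lemma darb_bound:
  assumes d: "darb m e f" shows "2 * m + 1 \<le> DIM('v)"
proof -
  have ef: "w (e i) (f j) = (if i = j then 1 else 0)" "w (e i) (e j) = 0" "w (f i) (f j) = 0"
    if "i < m" "j < m" for i j using d that unfolding darb_def by auto
  define E where "E = e ` {..<m}"
  define F where "F = f ` {..<m}"
  define T where "T = insert z (E \<union> F)"
  have injE: "inj_on e {..<m}"
  proof (rule inj_onI)
    fix i j assume ij: "i \<in> {..<m}" "j \<in> {..<m}" "e i = e j"
    have a: "w (e i) (f i) = 1" using ef(1)[of i i] ij(1) by simp
    have b: "w (e j) (f i) = (if j = i then 1 else 0)" using ef(1)[of j i] ij(1,2) by simp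
    show "i = j" using a b ij(3) by (metis zero_neq_one)
  qed
  have injF: "inj_on f {..<m}"
  proof (rule inj_onI)
    fix i j assume ij: "i \<in> {..<m}" "j \<in> {..<m}" "f i = f j"
    have a: "w (e i) (f i) = 1" using ef(1)[of i i] ij(1) by simp
    have b: "w (e i) (f j) = (if i = j then 1 else 0)" using ef(1)[of i j] ij(1,2) by simp
    show "i = j" using a b ij(3) by (metis zero_neq_one)
  qed
  have ne: "e i \<noteq> f j" if "i < m" "j < m" for i j
  proof
    assume "e i = f j"
    then have "w (e i) (f i) = w (f j) (f i)" by simp
    then show False using ef(1)[of i i] ef(3)[of j i] that by simp
  qed
  have EF: "E \<inter> F = {}" unfolding E_def F_def using ne by auto
  have zEF: "z \<notin> E \<union> F" unfolding E_def F_def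
  proof
    assume "z \<in> e ` {..<m} \<union> f ` {..<m}"
    then obtain i where i: "i < m" "z = e i \<or> z = f i" by auto
    have a: "w (e i) (f i) = 1" using ef(1)[of i i] i(1) by simp
    have b: "w z (f i) = 0" "w (e i) z = 0" by simp_all
    show False using i(2) a b by (metis zero_neq_one)
  qed
  have cT: "card T = 2 * m + 1"
  proof -
    have "card (E \<union> F) = m + m" using card_Un_disjoint[of E F] EF card_image[OF injE] card_image[OF injF]
      unfolding E_def F_def by simp
    moreover have "finite (E \<union> F)" unfolding E_def F_def by simp
    ultimately show ?thesis unfolding T_def using zEF by (simp add: card_insert_if)
  qed
  have finT: "finite T" unfolding T_def E_def F_def by simp
  have ze: "z \<noteq> e j" "z \<noteq> f j" if "j < m" for j using zEF that unfolding E_def F_def by auto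
  have wf: "w x (f j) = (if x = e j then 1 else 0)" if xT: "x \<in> T" and j: "j < m" for x j
  proof -
    consider "x = z" | i where "i < m" "x = e i" | i where "i < m" "x = f i"
      using xT unfolding T_def E_def F_def by auto
    then show ?thesis
    proof cases
      case 1 then show ?thesis using ze[OF j] by simp
    next
      case (2 i)
      have "e i = e j \<longleftrightarrow> i = j" using injE 2 j by (auto simp: inj_on_eq_iff)
      then show ?thesis using 2 ef(1)[of i j] j by simp
    next
      case (3 i) then show ?thesis using ne[of j i] ef(3)[of i j] j by auto
    qed
  qed
  have we: "w (e j) x = (if x = f j then 1 else 0)" if xT: "x \<in> T" and j: "j < m" for x j
  proof -
    consider "x = z" | i where "i < m" "x = e i" | i where "i < m" "x = f i"
      using xT unfolding T_def E_def F_def by auto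
    then show ?thesis
    proof cases
      case 1 then show ?thesis using ze[OF j] by simp
    next
      case (2 i) then show ?thesis using ne[of i j] ef(2)[of j i] j by auto
    next
      case (3 i)
      have "f i = f j \<longleftrightarrow> i = j" using injF 3 j by (auto simp: inj_on_eq_iff)
      then show ?thesis using 3 ef(1)[of j i] j by auto
    qed
  qed
  have "independent T"
  proof (rule independent_if_scalars_zero[OF finT])
    fix c y assume s: "(\<Sum>x\<in>T. c x *\<^sub>R x) = 0" and yT: "y \<in> T"
    have ce: "c (e j) = 0" if j: "j < m" for j
    proof -
      have "w (\<Sum>x\<in>T. c x *\<^sub>R x) (f j) = (\<Sum>x\<in>T. c x * w x (f j))" by (simp add: w_sum_l w_simps)
      also have "\<dots> = (\<Sum>x\<in>T. if x = e j then c x else 0)" using wf j by (intro sum.cong) auto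
      also have "\<dots> = c (e j)" using finT j unfolding T_def E_def by simp
      finally show ?thesis using s by (simp add: w_simps)
    qed
    have cf: "c (f j) = 0" if j: "j < m" for j
    proof -
      have "w (e j) (\<Sum>x\<in>T. c x *\<^sub>R x) = (\<Sum>x\<in>T. c x * w (e j) x)" by (simp add: w_sum_r w_simps)
      also have "\<dots> = (\<Sum>x\<in>T. if x = f j then c x else 0)" using we j by (intro sum.cong) auto
      also have "\<dots> = c (f j)" using finT j unfolding T_def F_def by simp
      finally show ?thesis using s by (simp add: w_simps)
    qed
    have c0: "c x = 0" if "x \<in> E \<union> F" for x using that ce cf unfolding E_def F_def by auto
    have "(\<Sum>x\<in>T. c x *\<^sub>R x) = c z *\<^sub>R z + (\<Sum>x\<in>E \<union> F. c x *\<^sub>R x)"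
      unfolding T_def using zEF finT T_def by (simp add: sum.insert)
    also have "(\<Sum>x\<in>E \<union> F. c x *\<^sub>R x) = 0" using c0 by simp
    finally have "c z = 0" using s zne by simp
    then show "c y = 0" using yT c0 unfolding T_def by auto
  qed
  then show ?thesis using independent_bound[of T] cT by simp
qed

lemma darb_full:
  assumes d: "darb k e f" and dim: "DIM('v) = 2 * k + 1"
  shows "Pr k e f x \<in> span {z}"
proof -
  have "\<forall>x y. w (Pr k e f x) (Pr k e f y) = 0"
  proof (rule ccontr)
    assume "\<not> ?thesis"
    then obtain x y where xy: "w (Pr k e f x) (Pr k e f y) \<noteq> 0" by blast
    define p where "p = Pr k e f x"
    define q where "q = (1 / w p (Pr k e f y)) *\<^sub>R Pr k e f y"
    have pq: "w p q = 1" using xy by (simp add: q_def p_def w_simps)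
    have pp: "w p p = 0" "w q q = 0" by simp_all
    have pe: "w p (e j) = 0" "w p (f j) = 0" "w q (e j) = 0" "w q (f j) = 0" if "j < k" for j
      using Pperp[OF d that] unfolding p_def q_def by (simp_all add: w_simps)
    have ep: "w (e j) p = 0" "w (f j) p = 0" "w (e j) q = 0" "w (f j) q = 0" if "j < k" for j
      using pe[OF that] om_anti by (metis neg_equal_0_iff_equal)+
    have "darb (Suc k) (e(k := p)) (f(k := q))"
      unfolding darb_def
    proof (intro allI impI)
      fix i j assume i: "i < Suc k" and j: "j < Suc k"
      show "w ((e(k := p)) i) ((f(k := q)) j) = (if i = j then 1 else 0) \<and> w ((e(k := p)) i) ((e(k := p)) j) = 0 \<and> w ((f(k := q)) i) ((f(k := q)) j) = 0"
        using d i j pq pp pe ep unfolding darb_def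
        by (cases "i = k"; cases "j = k") (auto simp: less_Suc_eq)
    qed
    then show False using darb_bound dim by fastforce
  qed
  then show ?thesis by (rule Pzero_rad[OF d])
qed

end

locale frame =
  fixes I :: "'i set" and v :: "'i \<Rightarrow> 'v::euclidean_space" and kap :: "'i \<Rightarrow> 'v \<Rightarrow> real"
    and eps :: "'i \<Rightarrow> real"
  assumes finI: "finite I" and link: "\<And>p. p \<in> I \<Longrightarrow> linear (kap p)"
    and bio: "\<And>p q. p \<in> I \<Longrightarrow> q \<in> I \<Longrightarrow> kap p (v q) = (if p = q then 1 else 0)"
    and recon: "\<And>y. y = (\<Sum>p\<in>I. kap p y *\<^sub>R v p)"
    and epsv: "\<And>p. p \<in> I \<Longrightarrow> eps p = 1 \<or> eps p = -1"
begin

definition G :: "'v \<Rightarrow> 'v \<Rightarrow> real" where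
  "G x y = (\<Sum>p\<in>I. eps p * kap p x * kap p y)"

lemma eps2: "p \<in> I \<Longrightarrow> eps p * eps p = 1" using epsv[of p] by auto

lemma G_bil: "bilinear G"
  unfolding bilinear_def
proof (intro conjI allI)
  fix x show "linear (G x)"
  proof (rule linearI)
    fix a b show "G x (a + b) = G x a + G x b" unfolding G_def
      by (simp add: sum.distrib[symmetric] linear_add[OF link] algebra_simps cong: sum.cong)
    fix c a show "G x (c *\<^sub>R a) = c *\<^sub>R G x a" unfolding G_def
      by (simp add: sum_distrib_left linear_scale[OF link] algebra_simps cong: sum.cong)
  qed
next
  fix y show "linear (\<lambda>x. G x y)"
  proof (rule linearI)
    fix a b show "G (a + b) y = G a y + G b y" unfolding G_def
      by (simp add: sum.distrib[symmetric] linear_add[OF link] algebra_simps cong: sum.cong)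
    fix c a show "G (c *\<^sub>R a) y = c *\<^sub>R G a y" unfolding G_def
      by (simp add: sum_distrib_left linear_scale[OF link] algebra_simps cong: sum.cong)
  qed
qed

lemma G_sym: "G x y = G y x" unfolding G_def by (simp add: algebra_simps)

lemma Gv: assumes p: "p \<in> I" and q: "q \<in> I" shows "G (v p) (v q) = (if p = q then eps p else 0)"
proof -
  have "G (v p) (v q) = (\<Sum>r\<in>I. if r = p then (if p = q then eps p else 0) else 0)"
    unfolding G_def using p q by (intro sum.cong refl) (auto simp: bio)
  also have "\<dots> = (if p = q then eps p else 0)" using finI p by simp
  finally show ?thesis .
qed

sublocale gb: bform G using G_bil G_sym by unfold_locales

lemma card_I: "card I = DIM('v)"
proof -
  have inj: "inj_on v I"
  proof (rule inj_onI)
    fix p q assume pq: "p \<in> I" "q \<in> I" "v p = v q"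
    have a: "kap p (v p) = 1" using bio pq(1) by simp
    have b: "kap p (v q) = (if p = q then 1 else 0)" using bio pq(1,2) by simp
    show "p = q" using a b pq(3) by (metis zero_neq_one)
  qed
  have o: "gb.orth (v ` I)" unfolding gb.orth_def using Gv by auto
  have nz: "\<forall>u\<in>v ` I. G u u \<noteq> 0" using Gv epsv by fastforce
  have ind: "independent (v ` I)" by (rule gb.orth_indep) (use finI o nz in auto)
  have sp: "UNIV \<subseteq> span (v ` I)"
  proof
    fix y :: 'v
    have "(\<Sum>p\<in>I. kap p y *\<^sub>R v p) \<in> span (v ` I)" by (intro span_sum span_mul span_base) auto
    then show "y \<in> span (v ` I)" using recon[of y] by simp
  qed
  have "span (v ` I) = UNIV" using sp by auto
  then have "dim (span (v ` I)) = DIM('v)" by simp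
  then show ?thesis using dim_span_eq_card_independent[OF ind] card_image[OF inj] by simp
qed

lemma sig: "pseudo_inner G \<and> neg_index G = card {p\<in>I. eps p < 0}"
proof -
  have "pseudo_inner G \<and> neg_index G = card {p\<in>I. G (v p) (v p) < 0}"
    by (rule gb.orth_sig[OF finI card_I]) (use Gv epsv in fastforce)+
  moreover have "{p\<in>I. G (v p) (v p) < 0} = {p\<in>I. eps p < 0}" using Gv by auto
  ultimately show ?thesis by simp
qed

end

locale hframe = hs B z + frame I v kap eps
  for B :: "'v::euclidean_space \<Rightarrow> 'v \<Rightarrow> 'v" and z and I :: "'i set" and v :: "'i \<Rightarrow> 'v" and kap eps
begin

definition J0 :: "'v \<Rightarrow> 'v" where
  "J0 x = (\<Sum>p\<in>I. (eps p * w x (v p)) *\<^sub>R v p)"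

lemma linJ0: "linear J0"
  unfolding J0_def
  by (rule linearI) (simp_all add: w_simps algebra_simps sum.distrib scaleR_sum_right)

lemma kJ0: assumes r: "r \<in> I" shows "kap r (J0 x) = eps r * w x (v r)"
proof -
  have "kap r (J0 x) = (\<Sum>p\<in>I. (eps p * w x (v p)) * kap r (v p))"
    unfolding J0_def by (simp add: linear_sum[OF link[OF r]] linear_scale[OF link[OF r]])
  also have "\<dots> = (\<Sum>p\<in>I. if p = r then eps r * w x (v r) else 0)"
    using r by (intro sum.cong refl) (auto simp: bio)
  also have "\<dots> = eps r * w x (v r)" using finI r by simp
  finally show ?thesis .
qed

lemma GJ0: "G (J0 x) y = w x y"
proof -
  have "G (J0 x) y = (\<Sum>r\<in>I. w x (v r) * kap r y)" unfolding G_def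
  proof (intro sum.cong refl)
    fix r assume r: "r \<in> I"
    have "eps r * kap r (J0 x) * kap r y = (eps r * eps r) * (w x (v r) * kap r y)"
      by (simp add: kJ0[OF r] algebra_simps)
    then show "eps r * kap r (J0 x) * kap r y = w x (v r) * kap r y" by (simp add: eps2[OF r])
  qed
  also have "\<dots> = w x (\<Sum>r\<in>I. kap r y *\<^sub>R v r)" by (simp add: w_sum_r w_simps mult.commute)
  also have "\<dots> = w x y" using recon[of y] by simp
  finally show ?thesis .
qed

lemma trJ0: "trace_map (\<lambda>x. J0 (J0 x)) = - (\<Sum>p\<in>I. \<Sum>r\<in>I. eps p * eps r * (w (v p) (v r))^2)"
proof -
  have e: "(\<lambda>x. J0 (J0 x)) = (\<lambda>x. \<Sum>p\<in>I. kap p x *\<^sub>R J0 (J0 (v p)))"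
  proof
    fix x
    have "J0 (J0 x) = J0 (J0 (\<Sum>p\<in>I. kap p x *\<^sub>R v p))" by (rule arg_cong[OF recon[of x]])
    then show "J0 (J0 x) = (\<Sum>p\<in>I. kap p x *\<^sub>R J0 (J0 (v p)))"
      by (simp add: linear_sum[OF linJ0] linear_scale[OF linJ0])
  qed
  have "trace_map (\<lambda>x. J0 (J0 x)) = (\<Sum>p\<in>I. kap p (J0 (J0 (v p))))"
    unfolding e tr_sum using link by (intro sum.cong) (auto intro: tr_rank1)
  also have "\<dots> = (\<Sum>p\<in>I. - (\<Sum>r\<in>I. eps p * eps r * (w (v p) (v r))^2))"
  proof (intro sum.cong refl)
    fix p assume p: "p \<in> I"
    have "kap p (J0 (J0 (v p))) = eps p * w (J0 (v p)) (v p)" by (rule kJ0[OF p])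
    also have "w (J0 (v p)) (v p) = (\<Sum>r\<in>I. eps r * w (v p) (v r) * w (v r) (v p))"
      unfolding J0_def by (simp add: w_sum_l w_simps)
    also have "\<dots> = (\<Sum>r\<in>I. - (eps r * (w (v p) (v r))^2))"
    proof (intro sum.cong refl)
      fix r
      have "w (v r) (v p) = - w (v p) (v r)" by (rule om_anti)
      then show "eps r * w (v p) (v r) * w (v r) (v p) = - (eps r * (w (v p) (v r))^2)"
        by (simp add: power2_eq_square)
    qed
    finally show "kap p (J0 (J0 (v p))) = - (\<Sum>r\<in>I. eps p * eps r * (w (v p) (v r))^2)"
      by (simp add: sum_negf sum_distrib_left mult.assoc)
  qed
  finally show ?thesis by (simp add: sum_negf)
qed

lemma flat:
  assumes "G z z = 0" "(\<Sum>p\<in>I. \<Sum>r\<in>I. eps p * eps r * (w (v p) (v r))^2) = 0"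
  shows "ricci_flat B G"
proof -
  have gsi: "gs B z G J0" unfolding gs_def gs_axioms_def using hs_axioms sig linJ0 GJ0 by blast
  interpret gs B z G J0 by (rule gsi)
  show ?thesis unfolding ricci_flat_def using ric_formula assms trJ0 by simp
qed

end

datatype ix = Zp | Zm | W0 | Ei nat | Fi nat

locale constr = hs B z for B :: "'v::euclidean_space \<Rightarrow> 'v \<Rightarrow> 'v" and z +
  fixes k :: nat and e f :: "nat \<Rightarrow> 'v" and s :: "nat \<Rightarrow> real" and c :: real
  assumes d: "darb k e f" and dimk: "DIM('v) = 2 * k + 1" and k1: "1 \<le> k"
    and sv: "\<And>i. s i = 1 \<or> s i = -1" and c2: "c^2 = real k - 1"
begin

lemma ef_rel[simp]: "i < k \<Longrightarrow> j < k \<Longrightarrow> w (e i) (f j) = (if i = j then 1 else 0)"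
  and ee_rel[simp]: "i < k \<Longrightarrow> j < k \<Longrightarrow> w (e i) (e j) = 0"
  and ff_rel[simp]: "i < k \<Longrightarrow> j < k \<Longrightarrow> w (f i) (f j) = 0"
  using d unfolding darb_def by auto

lemma fe_rel[simp]: "i < k \<Longrightarrow> j < k \<Longrightarrow> w (f i) (e j) = (if i = j then -1 else 0)"
  using om_anti[of "f i" "e j"] ef_rel[of j i] by auto

definition al :: "'v \<Rightarrow> real" where "al x = (Pr k e f x \<bullet> z) / (z \<bullet> z)"

lemma Pr_add: "Pr k e f (x + y) = Pr k e f x + Pr k e f y"
  by (simp add: Pr_def w_simps algebra_simps sum.distrib scaleR_add_left)
lemma Pr_scale: "Pr k e f (a *\<^sub>R x) = a *\<^sub>R Pr k e f x"
  by (simp add: Pr_def w_simps algebra_simps scaleR_sum_right)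
lemma lin_Pr: "linear (Pr k e f)" by (rule linearI) (simp_all add: Pr_add Pr_scale)
lemma lin_al: "linear al" unfolding al_def
  by (rule linearI) (simp_all add: Pr_add Pr_scale inner_add_left add_divide_distrib)

lemma al_add[simp]: "al (x + y) = al x + al y" using linear_add[OF lin_al] .
lemma al_diff[simp]: "al (x - y) = al x - al y" using linear_diff[OF lin_al] .
lemma al_scale[simp]: "al (a *\<^sub>R x) = a * al x" using linear_scale[OF lin_al] by simp

lemma Pr_al: "Pr k e f x = al x *\<^sub>R z"
proof -
  obtain t where t: "Pr k e f x = t *\<^sub>R z" using darb_full[OF d dimk, of x] by (auto simp: span_singleton)
  then show ?thesis using zne by (simp add: al_def)
qed

lemma recD: "x = al x *\<^sub>R z + (\<Sum>i<k. w x (f i) *\<^sub>R e i + w (e i) x *\<^sub>R f i)"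
  using Pr_al[of x] unfolding Pr_def by (simp add: algebra_simps)

lemma al_z[simp]: "al z = 1"
proof -
  have "Pr k e f z = z" by (simp add: Pr_def)
  then show ?thesis using zne by (simp add: al_def)
qed

lemma al_e[simp]: assumes j: "j < k" shows "al (e j) = 0"
proof -
  have "(\<Sum>i<k. w (e j) (f i) *\<^sub>R e i + w (e i) (e j) *\<^sub>R f i) = (\<Sum>i<k. if i = j then e j else 0)"
    using j by (intro sum.cong refl) auto
  then have "Pr k e f (e j) = 0" using j by (simp add: Pr_def)
  then show ?thesis by (simp add: al_def)
qed

lemma al_f[simp]: assumes j: "j < k" shows "al (f j) = 0"
proof -
  have "(\<Sum>i<k. w (f j) (f i) *\<^sub>R e i + w (e i) (f j) *\<^sub>R f i) = (\<Sum>i<k. if i = j then f j else 0)"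
    using j by (intro sum.cong refl) auto
  then have "Pr k e f (f j) = 0" using j by (simp add: Pr_def)
  then show ?thesis by (simp add: al_def)
qed

lemma c01: "c = 0 \<or> 1 < k"
proof (cases "k = 1")
  case True then have "c^2 = 0" using c2 by simp
  then show ?thesis by simp
next
  case False then show ?thesis using k1 by simp
qed

definition I :: "ix set" where "I = {Zp, Zm, W0} \<union> (Ei ` {1..<k} \<union> Fi ` {1..<k})"

definition v :: "ix \<Rightarrow> 'v" where
  "v p = (case p of Zp \<Rightarrow> z + (1/2) *\<^sub>R e 0 | Zm \<Rightarrow> z - (1/2) *\<^sub>R e 0 | W0 \<Rightarrow> f 0 + c *\<^sub>R f 1
     | Ei i \<Rightarrow> e i | Fi i \<Rightarrow> f i)"

definition kap :: "ix \<Rightarrow> 'v \<Rightarrow> real" where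
  "kap p x = (case p of Zp \<Rightarrow> al x / 2 + w x (f 0) | Zm \<Rightarrow> al x / 2 - w x (f 0) | W0 \<Rightarrow> w (e 0) x
     | Ei i \<Rightarrow> w x (f i) | Fi i \<Rightarrow> w (e i) x - (if i = 1 then c * w (e 0) x else 0))"

definition eps :: "ix \<Rightarrow> real" where
  "eps p = (case p of Zp \<Rightarrow> 1 | Zm \<Rightarrow> -1 | W0 \<Rightarrow> - s 1 | Ei i \<Rightarrow> s i | Fi i \<Rightarrow> s i)"

lemma sumI: "(\<Sum>p\<in>I. F p) = F Zp + F Zm + F W0 + (\<Sum>i\<in>{1..<k}. F (Ei i)) + (\<Sum>i\<in>{1..<k}. F (Fi i))"
proof -
  have d1: "{Zp, Zm, W0} \<inter> (Ei ` {1..<k} \<union> Fi ` {1..<k}) = {}" by auto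
  have d2: "Ei ` {1..<k} \<inter> Fi ` {1..<k} = {}" by auto
  have "(\<Sum>p\<in>I. F p) = (\<Sum>p\<in>{Zp, Zm, W0}. F p) + (\<Sum>p\<in>Ei ` {1..<k} \<union> Fi ` {1..<k}. F p)"
    unfolding I_def by (rule sum.union_disjoint) (use d1 in auto)
  also have "(\<Sum>p\<in>Ei ` {1..<k} \<union> Fi ` {1..<k}. F p) = (\<Sum>p\<in>Ei ` {1..<k}. F p) + (\<Sum>p\<in>Fi ` {1..<k}. F p)"
    by (rule sum.union_disjoint) (use d2 in auto)
  also have "(\<Sum>p\<in>Ei ` {1..<k}. F p) = (\<Sum>i\<in>{1..<k}. F (Ei i))"
    by (rule sum.reindex_cong[of Ei]) (auto simp: inj_on_def)
  also have "(\<Sum>p\<in>Fi ` {1..<k}. F p) = (\<Sum>i\<in>{1..<k}. F (Fi i))"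
    by (rule sum.reindex_cong[of Fi]) (auto simp: inj_on_def)
  finally show ?thesis by (simp add: add.assoc)
qed

lemma k0: "0 < k" using k1 by simp

lemma link: "linear (kap p)"
  by (cases p) (auto simp: kap_def w_simps algebra_simps intro!: linearI)

lemma I_cases: assumes "p \<in> I"
  obtains "p = Zp" | "p = Zm" | "p = W0" | i where "p = Ei i" "1 \<le> i" "i < k" | i where "p = Fi i" "1 \<le> i" "i < k"
  using assms unfolding I_def by auto

lemma kv_Zp: "kap p (v Zp) = (if p = Zp then 1 else 0)" if "p \<in> I"
  using that by (cases rule: I_cases) (auto simp: kap_def v_def w_simps k0)
lemma kv_Zm: "kap p (v Zm) = (if p = Zm then 1 else 0)" if "p \<in> I"
  using that by (cases rule: I_cases) (auto simp: kap_def v_def w_simps k0)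
lemma kv_W0: "kap p (v W0) = (if p = W0 then 1 else 0)" if "p \<in> I"
proof (cases "1 < k")
  case True
  from that show ?thesis by (cases rule: I_cases) (use True in \<open>auto simp: kap_def v_def w_simps k0\<close>)
next
  case False
  then have c0: "c = 0" using c01 by simp
  have c0': "c *\<^sub>R x = 0" "c * r = 0" for x :: 'v and r :: real using c0 by simp_all
  from that show ?thesis by (cases rule: I_cases) (use False in \<open>auto simp: kap_def v_def w_simps k0 c0'\<close>)
qed
lemma kv_E: "kap p (v (Ei j)) = (if p = Ei j then 1 else 0)" if "p \<in> I" "1 \<le> j" "j < k"
  using that(1) by (cases rule: I_cases) (use that in \<open>auto simp: kap_def v_def w_simps k0\<close>)
lemma kv_F: "kap p (v (Fi j)) = (if p = Fi j then 1 else 0)" if "p \<in> I" "1 \<le> j" "j < k"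
  using that(1) by (cases rule: I_cases) (use that in \<open>auto simp: kap_def v_def w_simps k0\<close>)

lemma bio: assumes p: "p \<in> I" and q: "q \<in> I" shows "kap p (v q) = (if p = q then 1 else 0)"
  using q
proof (cases rule: I_cases)
  case 1 then show ?thesis using kv_Zp[OF p] by simp
next
  case 2 then show ?thesis using kv_Zm[OF p] by simp
next
  case 3 then show ?thesis using kv_W0[OF p] by simp
next
  case (4 i) then show ?thesis using kv_E[OF p, of i] by simp
next
  case (5 i) then show ?thesis using kv_F[OF p, of i] by simp
qed

lemma recon: "y = (\<Sum>p\<in>I. kap p y *\<^sub>R v p)"
proof -
  have A1: "kap Zp y *\<^sub>R v Zp + kap Zm y *\<^sub>R v Zm = (kap Zp y + kap Zm y) *\<^sub>R z + ((kap Zp y - kap Zm y) / 2) *\<^sub>R e 0"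
    by (simp add: v_def algebra_simps diff_divide_distrib scaleR_diff_left)
  have A2: "kap Zp y + kap Zm y = al y" "(kap Zp y - kap Zm y) / 2 = w y (f 0)"
    by (simp_all add: kap_def)
  have A: "kap Zp y *\<^sub>R v Zp + kap Zm y *\<^sub>R v Zm = al y *\<^sub>R z + w y (f 0) *\<^sub>R e 0"
    unfolding A1 A2 ..
  have B: "kap W0 y *\<^sub>R v W0 = w (e 0) y *\<^sub>R f 0 + (c * w (e 0) y) *\<^sub>R f 1"
    by (simp add: kap_def v_def algebra_simps)
  have C: "(\<Sum>i\<in>{1..<k}. kap (Fi i) y *\<^sub>R v (Fi i)) = (\<Sum>i\<in>{1..<k}. w (e i) y *\<^sub>R f i) - (if 1 < k then (c * w (e 0) y) *\<^sub>R f 1 else 0)"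
  proof -
    have "(\<Sum>i\<in>{1..<k}. kap (Fi i) y *\<^sub>R v (Fi i)) = (\<Sum>i\<in>{1..<k}. w (e i) y *\<^sub>R f i - (if i = 1 then (c * w (e 0) y) *\<^sub>R f 1 else 0))"
      by (intro sum.cong refl) (auto simp: kap_def v_def algebra_simps)
    also have "\<dots> = (\<Sum>i\<in>{1..<k}. w (e i) y *\<^sub>R f i) - (\<Sum>i\<in>{1..<k}. (if i = 1 then (c * w (e 0) y) *\<^sub>R f 1 else 0))"
      by (rule sum_subtractf)
    also have "(\<Sum>i\<in>{1..<k}. (if i = 1 then (c * w (e 0) y) *\<^sub>R f 1 else 0)) = (if 1 < k then (c * w (e 0) y) *\<^sub>R f 1 else 0)"
      by simp
    finally show ?thesis .
  qed
  have D: "(\<Sum>i\<in>{1..<k}. kap (Ei i) y *\<^sub>R v (Ei i)) = (\<Sum>i\<in>{1..<k}. w y (f i) *\<^sub>R e i)"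
    by (intro sum.cong refl) (auto simp: kap_def v_def)
  have E: "(\<Sum>i<k. w y (f i) *\<^sub>R e i + w (e i) y *\<^sub>R f i) = (w y (f 0) *\<^sub>R e 0 + w (e 0) y *\<^sub>R f 0) + (\<Sum>i\<in>{1..<k}. w y (f i) *\<^sub>R e i + w (e i) y *\<^sub>R f i)"
  proof -
    have "{..<k} = insert 0 {1..<k}" using k1 by auto
    then show ?thesis by simp
  qed
  have cc: "(c * w (e 0) y) *\<^sub>R f 1 - (if 1 < k then (c * w (e 0) y) *\<^sub>R f 1 else 0) = 0"
    using c01 by auto
  have L: "(\<Sum>p\<in>I. kap p y *\<^sub>R v p) = (al y *\<^sub>R z + w y (f 0) *\<^sub>R e 0) + (w (e 0) y *\<^sub>R f 0 + (c * w (e 0) y) *\<^sub>R f 1)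
      + (\<Sum>i\<in>{1..<k}. w y (f i) *\<^sub>R e i) + ((\<Sum>i\<in>{1..<k}. w (e i) y *\<^sub>R f i) - (if 1 < k then (c * w (e 0) y) *\<^sub>R f 1 else 0))"
    unfolding sumI A B C D ..
  have R0: "y = al y *\<^sub>R z + ((w y (f 0) *\<^sub>R e 0 + w (e 0) y *\<^sub>R f 0) + (\<Sum>i\<in>{1..<k}. w y (f i) *\<^sub>R e i + w (e i) y *\<^sub>R f i))"
    using recD[of y] unfolding E .
  have R: "y = al y *\<^sub>R z + ((w y (f 0) *\<^sub>R e 0 + w (e 0) y *\<^sub>R f 0) + ((\<Sum>i\<in>{1..<k}. w y (f i) *\<^sub>R e i) + (\<Sum>i\<in>{1..<k}. w (e i) y *\<^sub>R f i)))"
    using R0 unfolding sum.distrib .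
  define X1 where "X1 = al y *\<^sub>R z"
  define X2 where "X2 = w y (f 0) *\<^sub>R e 0"
  define X3 where "X3 = w (e 0) y *\<^sub>R f 0"
  define X4 where "X4 = (c * w (e 0) y) *\<^sub>R f 1"
  define X5 where "X5 = (\<Sum>i\<in>{1..<k}. w y (f i) *\<^sub>R e i)"
  define X6 where "X6 = (\<Sum>i\<in>{1..<k}. w (e i) y *\<^sub>R f i)"
  define X7 where "X7 = (if 1 < k then (c * w (e 0) y) *\<^sub>R f 1 else 0)"
  have c7: "X4 - X7 = 0" using cc unfolding X4_def X7_def .
  have "(\<Sum>p\<in>I. kap p y *\<^sub>R v p) = (X1 + X2) + (X3 + X4) + X5 + (X6 - X7)"
    using L unfolding X1_def X2_def X3_def X4_def X5_def X6_def X7_def .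
  also have "\<dots> = X1 + ((X2 + X3) + (X5 + X6)) + (X4 - X7)" by (simp add: algebra_simps)
  also have "\<dots> = y" using R c7 unfolding X1_def X2_def X3_def X5_def X6_def by simp
  finally show ?thesis by simp
qed

lemma epsv: "eps p = 1 \<or> eps p = -1"
  using sv by (cases p) (auto simp: eps_def)

lemma fr: "frame I v kap eps"
proof (rule frame.intro)
  show "finite I" by (simp add: I_def)
  show "\<And>p. p \<in> I \<Longrightarrow> linear (kap p)" by (rule link)
  show "\<And>p q. p \<in> I \<Longrightarrow> q \<in> I \<Longrightarrow> kap p (v q) = (if p = q then 1 else 0)" by (rule bio)
  show "\<And>y. y = (\<Sum>p\<in>I. kap p y *\<^sub>R v p)" by (rule recon)
  show "\<And>p. p \<in> I \<Longrightarrow> eps p = 1 \<or> eps p = -1" using epsv by blast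
qed

lemma hf: "hframe B z I v kap eps"
  unfolding hframe_def using hs_axioms fr by blast

definition Wt :: "ix \<Rightarrow> ix \<Rightarrow> real" where
  "Wt p r = (case (p, r) of (Zp, W0) \<Rightarrow> 1/2 | (W0, Zp) \<Rightarrow> -1/2 | (Zm, W0) \<Rightarrow> -1/2 | (W0, Zm) \<Rightarrow> 1/2
     | (W0, Ei j) \<Rightarrow> (if j = 1 then -c else 0) | (Ei i, W0) \<Rightarrow> (if i = 1 then c else 0)
     | (Ei i, Fi j) \<Rightarrow> (if i = j then 1 else 0) | (Fi i, Ei j) \<Rightarrow> (if i = j then -1 else 0) | _ \<Rightarrow> 0)"

lemma Wv_aux: assumes p: "p \<in> I" and r: "r \<in> I" and hk: "(1 < k \<and> H = True) \<or> (c = 0 \<and> H = False)"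
  shows "w (v p) (v r) = Wt p r"
proof -
  have c0': "c *\<^sub>R x = 0" "c * t = 0" if "\<not> H" for x :: 'v and t :: real using hk that by auto
  have k1': "Suc 0 < k" if "H" using hk that by auto
  show ?thesis
    using p
  proof (cases rule: I_cases)
    case 1 from r show ?thesis
      by (cases rule: I_cases; cases H) (use 1 k0 c0' k1' in \<open>auto simp: v_def Wt_def w_simps\<close>)
  next
    case 2 from r show ?thesis
      by (cases rule: I_cases; cases H) (use 2 k0 c0' k1' in \<open>auto simp: v_def Wt_def w_simps\<close>)
  next
    case 3 from r show ?thesis
      by (cases rule: I_cases; cases H) (use 3 k0 c0' k1' in \<open>auto simp: v_def Wt_def w_simps\<close>)
  next
    case (4 i) from r show ?thesis
      by (cases rule: I_cases; cases H) (use 4 k0 c0' k1' in \<open>auto simp: v_def Wt_def w_simps\<close>)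
  next
    case (5 i) from r show ?thesis
      by (cases rule: I_cases; cases H) (use 5 k0 c0' k1' in \<open>auto simp: v_def Wt_def w_simps\<close>)
  qed
qed

lemma Wv: assumes "p \<in> I" "r \<in> I" shows "w (v p) (v r) = Wt p r"
proof -
  have "(1 < k \<and> (1 < k) = True) \<or> (c = 0 \<and> (1 < k) = False)" using c01 by auto
  then show ?thesis by (rule Wv_aux[OF assms])
qed

sublocale hfr: hframe B z I v kap eps by (rule hf)

lemma ss: "s i * s i = 1" using sv[of i] by auto

lemma sum_d1: "(\<Sum>j\<in>{1..<k}. (F::nat\<Rightarrow>real) j * (if j = 1 then a else 0)) = (if 1 < k then F 1 * a else 0)"
proof -
  have "(\<Sum>j\<in>{1..<k}. F j * (if j = 1 then a else 0)) = (\<Sum>j\<in>{1..<k}. if j = 1 then F 1 * a else 0)"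
    by (intro sum.cong refl) auto
  also have "\<dots> = (if 1 < k then F 1 * a else 0)" by simp
  finally show ?thesis .
qed

lemma sum_d2: assumes "i \<in> {1..<k}" shows "(\<Sum>j\<in>{1..<k}. (F::nat\<Rightarrow>real) j * (if i = j then a else 0)) = F i * a"
proof -
  have "(\<Sum>j\<in>{1..<k}. F j * (if i = j then a else 0)) = (\<Sum>j\<in>{1..<k}. if i = j then F i * a else 0)"
    by (intro sum.cong refl) auto
  also have "\<dots> = F i * a" using assms by simp
  finally show ?thesis .
qed

definition Q :: "ix \<Rightarrow> real" where "Q p = (\<Sum>r\<in>I. eps r * (Wt p r)^2)"

lemma sq_if: "(if P then a else (0::real))^2 = (if P then a^2 else 0)" by simp

lemma Q_Zp: "Q Zp = - s 1 / 4"
  unfolding Q_def sumI by (simp add: Wt_def eps_def power2_eq_square)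
lemma Q_Zm: "Q Zm = - s 1 / 4"
  unfolding Q_def sumI by (simp add: Wt_def eps_def power2_eq_square)
lemma Q_W0: "Q W0 = (if 1 < k then s 1 * c^2 else 0)"
proof -
  have "(\<Sum>i\<in>{1..<k}. eps (Ei i) * (Wt W0 (Ei i))^2) = (\<Sum>i\<in>{1..<k}. s i * (if i = 1 then c^2 else 0))"
    by (intro sum.cong refl) (simp add: Wt_def eps_def sq_if)
  also have "\<dots> = (if 1 < k then s 1 * c^2 else 0)" by (rule sum_d1)
  finally show ?thesis unfolding Q_def sumI by (simp add: Wt_def eps_def)
qed
lemma Q_E: assumes i: "i \<in> {1..<k}" shows "Q (Ei i) = s i - (if i = 1 then s 1 * c^2 else 0)"
proof -
  have "(\<Sum>j\<in>{1..<k}. eps (Fi j) * (Wt (Ei i) (Fi j))^2) = (\<Sum>j\<in>{1..<k}. s j * (if i = j then 1 else 0))"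
    by (intro sum.cong refl) (simp add: Wt_def eps_def sq_if)
  also have "\<dots> = s i * 1" by (rule sum_d2[OF i])
  finally have A: "(\<Sum>j\<in>{1..<k}. eps (Fi j) * (Wt (Ei i) (Fi j))^2) = s i" by simp
  have B: "(\<Sum>j\<in>{1..<k}. eps (Ei j) * (Wt (Ei i) (Ei j))^2) = 0" by (simp add: Wt_def)
  show ?thesis unfolding Q_def sumI A B using i by (auto simp: Wt_def eps_def)
qed
lemma Q_F: assumes i: "i \<in> {1..<k}" shows "Q (Fi i) = s i"
proof -
  have "(\<Sum>j\<in>{1..<k}. eps (Ei j) * (Wt (Fi i) (Ei j))^2) = (\<Sum>j\<in>{1..<k}. s j * (if i = j then 1 else 0))"
    by (intro sum.cong refl) (simp add: Wt_def eps_def sq_if)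
  also have "\<dots> = s i * 1" by (rule sum_d2[OF i])
  finally have A: "(\<Sum>j\<in>{1..<k}. eps (Ei j) * (Wt (Fi i) (Ei j))^2) = s i" by simp
  have B: "(\<Sum>j\<in>{1..<k}. eps (Fi j) * (Wt (Fi i) (Fi j))^2) = 0" by (simp add: Wt_def)
  show ?thesis unfolding Q_def sumI A B by (simp add: Wt_def eps_def)
qed

lemma dsum: "(\<Sum>p\<in>I. \<Sum>r\<in>I. eps p * eps r * (w (v p) (v r))^2) = 0"
proof -
  have "(\<Sum>p\<in>I. \<Sum>r\<in>I. eps p * eps r * (w (v p) (v r))^2) = (\<Sum>p\<in>I. eps p * Q p)"
    unfolding Q_def by (intro sum.cong refl) (simp add: Wv sum_distrib_left mult.assoc)
  also have "\<dots> = - s 1 / 4 + s 1 / 4 + (- s 1) * (if 1 < k then s 1 * c^2 else 0)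
      + (\<Sum>i\<in>{1..<k}. s i * (s i - (if i = 1 then s 1 * c^2 else 0))) + (\<Sum>i\<in>{1..<k}. s i * s i)"
  proof -
    have e1: "(\<Sum>i\<in>{1..<k}. eps (Ei i) * Q (Ei i)) = (\<Sum>i\<in>{1..<k}. s i * (s i - (if i = 1 then s 1 * c^2 else 0)))"
      by (intro sum.cong refl) (simp add: Q_E eps_def)
    have e2: "(\<Sum>i\<in>{1..<k}. eps (Fi i) * Q (Fi i)) = (\<Sum>i\<in>{1..<k}. s i * s i)"
      by (intro sum.cong refl) (simp add: Q_F eps_def)
    show ?thesis unfolding sumI Q_Zp Q_Zm Q_W0 e1 e2 by (simp add: eps_def)
  qed
  also have "(\<Sum>i\<in>{1..<k}. s i * (s i - (if i = 1 then s 1 * c^2 else 0))) = (\<Sum>i\<in>{1..<k}. 1 - (if i = 1 then c^2 else 0))"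
    by (intro sum.cong refl) (auto simp: algebra_simps ss mult.assoc[symmetric])
  also have "\<dots> = real (k - 1) - (if 1 < k then c^2 else 0)"
    by (simp add: sum_subtractf)
  also have "(\<Sum>i\<in>{1..<k}. s i * s i) = real (k - 1)" by (simp add: ss)
  finally have fin: "(\<Sum>p\<in>I. \<Sum>r\<in>I. eps p * eps r * (w (v p) (v r))^2) = (- s 1) * (if 1 < k then s 1 * c^2 else 0)
      + (real (k - 1) - (if 1 < k then c^2 else 0)) + real (k - 1)" by simp
  show ?thesis
  proof (cases "1 < k")
    case True
    then have "(- s 1) * (if 1 < k then s 1 * c^2 else 0) = -(c^2)" using ss[of 1] by (simp add: algebra_simps)
    moreover have "real (k - 1) = c^2" using c2 True by (simp add: of_nat_diff)
    ultimately show ?thesis using fin True by simp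
  next
    case False
    then have "k = 1" using k1 by simp
    then show ?thesis using fin by simp
  qed
qed

lemma Gzz: "hfr.G z z = 0"
proof -
  have "hfr.G z z = (\<Sum>p\<in>I. eps p * kap p z * kap p z)" by (simp add: hfr.G_def)
  also have "\<dots> = 0"
  proof -
    have z0: "w (e 0) z = 0" "\<And>i. w (e i) z = 0" "\<And>i. w z (f i) = 0" by simp_all
    show ?thesis unfolding sumI by (simp add: eps_def kap_def z0 cong: if_cong)
  qed
  finally show ?thesis .
qed

lemma negcount: "card {p\<in>I. eps p < 0} = 1 + (if s 1 = 1 then 1 else 0) + 2 * card {i\<in>{1..<k}. s i = -1}"
proof -
  have fI: "finite I" by (simp add: I_def)
  have "card {p\<in>I. eps p < 0} = (\<Sum>p\<in>I. if eps p < 0 then 1 else (0::nat))"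
    using sum.inter_filter[OF fI, of "\<lambda>_. 1::nat" "\<lambda>p. eps p < 0"] by simp
  also have "\<dots> = 1 + (if s 1 = 1 then 1 else 0) + (\<Sum>i\<in>{1..<k}. if s i < 0 then 1 else 0) + (\<Sum>i\<in>{1..<k}. if s i < 0 then 1 else 0)"
    unfolding sumI using sv[of 1] by (auto simp: eps_def)
  also have "(\<Sum>i\<in>{1..<k}. if s i < 0 then 1 else (0::nat)) = card {i\<in>{1..<k}. s i = -1}"
  proof -
    have "{i\<in>{1..<k}. s i = -1} = {i\<in>{1..<k}. s i < 0}" using sv by force
    then show ?thesis using sum.inter_filter[of "{1..<k}" "\<lambda>_. 1::nat" "\<lambda>i. s i < 0"] by simp
  qed
  finally show ?thesis by simp
qed

theorem construct: "\<exists>g. ricci_flat B g \<and> pseudo_inner g \<and>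
    neg_index g = 1 + (if s 1 = 1 then 1 else 0) + 2 * card {i\<in>{1..<k}. s i = -1}"
  using hfr.flat[OF Gzz dsum] hfr.sig negcount by (intro exI[of _ hfr.G]) simp

end

lemma exists_sig:
  assumes "hs B z" "hs.darb B z k e f" "DIM('v) = 2 * k + 1" "1 \<le> k" "\<And>i. (s::nat\<Rightarrow>real) i = 1 \<or> s i = -1"
    "(c::real)^2 = real k - 1"
  shows "\<exists>g::'v::euclidean_space \<Rightarrow> 'v \<Rightarrow> real. ricci_flat B g \<and> pseudo_inner g \<and>
    neg_index g = 1 + (if s 1 = 1 then 1 else 0) + 2 * card {i\<in>{1..<k}. s i = -1}"
proof -
  interpret constr B z k e f s c using assms unfolding constr_def constr_axioms_def by blast
  show ?thesis by (rule construct)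
qed

lemma card_sgn:
  assumes "lo \<le> hi" "hi \<le> k" "1 \<le> lo"
  shows "card {i\<in>{1..<k}. (if lo \<le> i \<and> i < hi then -1 else (1::real)) = -1} = hi - lo"
proof -
  have "{i\<in>{1..<k}. (if lo \<le> i \<and> i < hi then -1 else (1::real)) = -1} = {lo..<hi}"
    using assms by auto
  then show ?thesis by simp
qed

theorem mainTheorem7:
  fixes B :: "'v::euclidean_space \<Rightarrow> 'v \<Rightarrow> 'v" and k :: nat
  assumes "heisenberg B" and "DIM('v) = 2 * k + 1" and "k \<ge> 1"
  shows "((\<exists>g. lorentzian g \<and> ricci_flat B g) \<longleftrightarrow> k = 1) \<and>
         (\<forall>q. 2 \<le> q \<and> q \<le> k \<longrightarrow>
            (\<exists>g. has_signature g q (2 * k + 1 - q) \<and> ricci_flat B g))"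
proof -
  obtain z where hsz: "hs B z" using heis_hs[OF assms(1)] by blast
  interpret hs B z by (rule hsz)
  obtain e f where d: "darb k e f" using darb_exists[of k] assms(2) by auto
  have P1: "(\<exists>g. lorentzian g \<and> ricci_flat B g) \<longleftrightarrow> k = 1"
  proof
    assume "\<exists>g. lorentzian g \<and> ricci_flat B g"
    then obtain g where g: "lorentzian g" "ricci_flat B g" by blast
    have pig: "pseudo_inner g" and ni: "neg_index g = 1"
      using g(1) unfolding lorentzian_def has_signature_def by auto
    obtain J where J: "linear J" "\<forall>x y. g (J x) y = om B z x y" using exists_J[OF pig om_bil] by blast
    interpret gs B z g J using hsz pig J unfolding gs_def gs_axioms_def by blast
    show "k = 1"
    proof (cases "g z z = 0")
      case True
      then have "DIM('v) \<le> 3" using lor_null ni g(2) by blast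
      then show ?thesis using assms(2,3) by simp
    next
      case False
      then show ?thesis using nonnull_not_flat g(2) by blast
    qed
  next
    assume k: "k = 1"
    have "\<exists>g::'v \<Rightarrow> 'v \<Rightarrow> real. ricci_flat B g \<and> pseudo_inner g \<and>
      neg_index g = 1 + (if (\<lambda>_. -1::real) 1 = 1 then 1 else 0) + 2 * card {i\<in>{1..<k}. (\<lambda>_. -1::real) i = -1}"
      by (rule exists_sig[OF hsz d assms(2,3)]) (use k in auto)
    moreover have "1 + (if (\<lambda>_. -1::real) 1 = 1 then 1 else 0) + 2 * card {i\<in>{1..<k}. (\<lambda>_. -1::real) i = -1} = (1::nat)"
      using k by simp
    ultimately obtain g :: "'v \<Rightarrow> 'v \<Rightarrow> real" where g: "ricci_flat B g" "pseudo_inner g" "neg_index g = 1"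
      by auto
    then have "lorentzian g" using g(2) assms(2) k unfolding lorentzian_def has_signature_def by simp
    then show "\<exists>g. lorentzian g \<and> ricci_flat B g" using g(1) by blast
  qed
  have P2: "\<exists>g. has_signature g q (2 * k + 1 - q) \<and> ricci_flat B g" if q: "2 \<le> q" "q \<le> k" for q
  proof -
    define c where "c = sqrt (real k - 1)"
    have c2: "c^2 = real k - 1" using assms(3) by (simp add: c_def)
    obtain lo hi where lh: "1 \<le> lo" "lo \<le> hi" "hi \<le> k" "q = 1 + (if lo = 1 then 0 else 1) + 2 * (hi - lo)"
      "lo = 1 \<longrightarrow> lo < hi"
    proof (cases "even q")
      case True
      show ?thesis
      proof (rule that[of 2 "2 + (q - 2) div 2"])
        have m: "q = 2 + 2 * ((q - 2) div 2)" "(q - 2) div 2 \<le> k - 2"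
          using True q by presburger+
        show "1 \<le> (2::nat)" by simp
        show "2 \<le> 2 + (q - 2) div 2" by simp
        show "2 + (q - 2) div 2 \<le> k" using m(2) q by linarith
        show "q = 1 + (if 2 = (1::nat) then 0 else 1) + 2 * (2 + (q - 2) div 2 - 2)" using m(1) by simp
        show "2 = (1::nat) \<longrightarrow> 2 < 2 + (q - 2) div 2" by simp
      qed
    next
      case False
      show ?thesis
      proof (rule that[of 1 "1 + (q - 1) div 2"])
        have m: "1 \<le> (q - 1) div 2" "q = 1 + 2 * ((q - 1) div 2)" "(q - 1) div 2 \<le> k - 1"
          using False q by presburger+
        show "1 \<le> (1::nat)" by simp
        show "1 \<le> 1 + (q - 1) div 2" by simp
        show "1 + (q - 1) div 2 \<le> k" using m(3) q by linarith
        show "q = 1 + (if 1 = (1::nat) then 0 else 1) + 2 * (1 + (q - 1) div 2 - 1)" using m(2) by simp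
        show "1 = (1::nat) \<longrightarrow> 1 < 1 + (q - 1) div 2" using m(1) by simp
      qed
    qed
    define s where "s i = (if lo \<le> i \<and> i < hi then -1 else (1::real))" for i
    have sv: "s i = 1 \<or> s i = -1" for i by (simp add: s_def)
    have ex: "\<exists>g::'v \<Rightarrow> 'v \<Rightarrow> real. ricci_flat B g \<and> pseudo_inner g \<and>
      neg_index g = 1 + (if s 1 = 1 then 1 else 0) + 2 * card {i\<in>{1..<k}. s i = -1}"
      by (rule exists_sig[OF hsz d assms(2,3) sv c2])
    then obtain g :: "'v \<Rightarrow> 'v \<Rightarrow> real" where g: "ricci_flat B g" "pseudo_inner g"
      "neg_index g = 1 + (if s 1 = 1 then 1 else 0) + 2 * card {i\<in>{1..<k}. s i = -1}"
      by (elim exE conjE)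
    have "card {i\<in>{1..<k}. s i = -1} = hi - lo" unfolding s_def by (rule card_sgn) (use lh in auto)
    moreover have "(if s 1 = 1 then 1 else 0) = (if lo = 1 then 0 else (1::nat))"
    proof (cases "lo = 1")
      case True
      then have "s 1 = -1" using lh(5) by (simp add: s_def)
      then show ?thesis using True by simp
    next
      case False
      then have "s 1 = 1" using lh(1) by (simp add: s_def)
      then show ?thesis using False by simp
    qed
    ultimately have "neg_index g = q" using g(3) lh(4) by simp
    then have "has_signature g q (2 * k + 1 - q)" using g(2) assms(2) q unfolding has_signature_def by simp
    then show ?thesis using g(1) by blast
  qed
  show ?thesis using P1 P2 by blast
qed

end
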